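(* Let $I$ be a finite index set with $m \triangleq |I|$. For each $\alpha\in I$ let $X_\alpha$ be a Bernoulli random variable with $p_\alpha \triangleq \Pr(X_\alpha=1)=1-\Pr(X_\alpha=0)>0$ (the $X_\alpha$ may be dependent and non-identically distributed). Let $W\triangleq\sum_{\alpha\in I}X_\alpha$ and $\lambda\triangleq \mathbb{E}(W)=\sum_{\alpha\in I}p_\alpha$, assumed to lie in $(0,\infty)$. For every $\alpha\in I$ let $B_\alpha\subseteq I$ be a subset with $\alpha\in B_\alpha$, and define \[ b_1\triangleq\sum_{\alpha\in I}\sum_{\beta\in B_\alpha}p_\alpha p_\beta,\qquad b_2\triangleq\sum_{\alpha\in I}\sum_{\beta\in B_\alpha,\,\beta\neq\alpha}p_{\alpha,\beta},\quad p_{\alpha,\beta}\triangleq\mathbb{E}(X_\alpha X_\beta), \] \[ b_3\triangleq\sum_{\alpha\in I}s_\alpha,\qquad s_\alpha\triangleq\mathbb{E}\Bigl|\mathbb{E}\bigl(X_\alpha-p_\alpha \,\big|\, \sigma(\{X_\beta\}_{\beta\in I\setminus B_\alpha})\bigr)\Bigr|, \] where $\sigma(\{X_\beta\}_{\beta\in I\setminus B_\alpha})$ is the $\sigma$-algebra generated by the random variables $X_\beta$, $\beta\in I\setminus B_\alpha$. Define \[ a(\lambda)\triangleq 2\left[(b_1+b_2)\left(\frac{1-e^{-\lambda}}{\lambda}\right)+b_3\Bigl(1\wedge\frac{1.4}{\sqrt{\lambda}}\Bigr)\right], \] \[ b(\lambda)\triangleq\left[\Bigl(\lambda\log\bigl(\tfrac{e}{\lambda}\bigr)\Bigr)_+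 +\lambda^2+\frac{6\log(2\pi)+1}{12}\right]\exp\left\{-\left[\lambda+(m-1)\log\left(\frac{m-1}{\lambda e}\right)\right]\right\}, \] where $a\wedge b\triangleq\min\{a,b\}$ and $(x)_+\triangleq\max\{x,0\}$. Let $Z\sim\mathrm{Po}(\lambda)$ be a Poisson random variable with mean $\lambda$. If $a(\lambda)\le\frac12$ and $\lambda\le m-1$, then \[ |H(Z)-H(W)|\le a(\lambda)\log\left(\frac{m+2}{a(\lambda)}\right)+b(\lambda). \]
   Context: $H(\cdot)$ denotes Shannon entropy (of the probability mass function of an integer-valued random variable) computed with natural logarithms, i.e. in nats; $\log$ is the natural logarithm. *)

theory Defs
  imports "HOL-Probability.Probability"
begin

text \<open>Shannon entropy (in nats) of a probability mass function on the naturals,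
  with the convention 0 log 0 = 0 (automatic since ln 0 = 0 in Isabelle).\<close>
definition nat_entropy :: "(nat \<Rightarrow> real) \<Rightarrow> real" where
  "nat_entropy f = - (\<Sum>k. f k * ln (f k))"

definition poisson_pmf_fun :: "real \<Rightarrow> nat \<Rightarrow> real" where
  "poisson_pmf_fun lam k = exp (- lam) * lam ^ k / fact k"

definition gen_sigma :: "'a measure \<Rightarrow> 'i set \<Rightarrow> ('i \<Rightarrow> 'a \<Rightarrow> real) \<Rightarrow> 'a measure" where
  "gen_sigma M J X = sigma (space M) {X j -` A \<inter> space M | j A. j \<in> J \<and> A \<in> sets borel}"

end

theory Submission
  imports Defs
begin



abbreviation pp :: "real \<Rightarrow> nat \<Rightarrow> real" where "pp \<equiv> poisson_pmf_fun"

definition PF :: "real \<Rightarrow> nat \<Rightarrow> real" where "PF l k = (\<Sum>i\<le>k. pp l i)"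

lemma pp_pos: "l > 0 \<Longrightarrow> pp l k > 0"
  unfolding poisson_pmf_fun_def by simp

lemma pp_Suc: "pp l (Suc k) = l / real (Suc k) * pp l k"
  unfolding poisson_pmf_fun_def by (simp add: field_simps)

lemma pp_Suc': "real (Suc k) * pp l (Suc k) = l * pp l k"
  unfolding pp_Suc by simp

lemma pp_sums: "pp l sums 1"
proof -
  have "(\<lambda>n. l ^ n / fact n) sums exp l"
    using exp_converges[of l] by (simp add: divide_inverse scaleR_conv_of_real mult.commute)
  from sums_mult[OF this, of "exp (-l)"]
  show ?thesis unfolding poisson_pmf_fun_def by (simp add: exp_minus field_simps)
qed

lemma pp_summable: "summable (pp l)"
  using pp_sums by (rule sums_summable)

lemma pp_suminf: "suminf (pp l) = 1"
  using pp_sums by (rule sums_unique[symmetric])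

lemma sum_pp_le1: "l > 0 \<Longrightarrow> finite S \<Longrightarrow> sum (pp l) S \<le> 1"
  using sum_le_suminf[OF pp_summable, of S l] pp_pos[of l] pp_suminf[of l]
  by (simp add: less_imp_le)

lemma pp_le1: "l > 0 \<Longrightarrow> pp l k \<le> 1"
  using sum_pp_le1[of l "{k}"] by simp

lemma PF_le1: "l > 0 \<Longrightarrow> PF l k \<le> 1"
  unfolding PF_def using sum_pp_le1 by simp

lemma PF_nonneg: "l > 0 \<Longrightarrow> 0 \<le> PF l k"
  unfolding PF_def using pp_pos by (simp add: sum_nonneg less_imp_le)

lemma PF_Suc: "PF l (Suc k) = PF l k + pp l (Suc k)"
  unfolding PF_def by simp

lemma PF_0: "PF l 0 = pp l 0"
  unfolding PF_def by simp

lemma tail_sums: "(\<lambda>i. pp l (i + Suc k)) sums (1 - PF l k)"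
proof -
  have "(\<lambda>i. pp l (i + Suc k)) sums (1 - (\<Sum>i<Suc k. pp l i))"
    by (rule sums_split_initial_segment[OF pp_sums])
  thus ?thesis unfolding PF_def lessThan_Suc_atMost .
qed


lemma aux1: fixes x F l k :: real
  assumes "0 < x" "0 \<le> F" "F \<le> x * (l/(l-k))" "k+1 \<le> l" "k \<ge> 0"
  shows "F * (l/(k+1)*x) \<le> (F + l/(k+1)*x) * x"
proof -
  have d: "l/(k+1)*x - x = x * ((l-(k+1))/(k+1))" using assms by (simp add: field_simps)
  have "F * (l/(k+1)*x - x) \<le> (x * (l/(l-k))) * (x * ((l-(k+1))/(k+1)))"
    unfolding d using assms by (intro mult_right_mono mult_nonneg_nonneg) auto
  also have "\<dots> = (x*x) * (l/(l-k)*((l-(k+1))/(k+1)))" by simp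
  also have "\<dots> \<le> (x*x) * (l/(k+1))"
  proof (rule mult_left_mono)
    have "l/(l-k)*((l-(k+1))/(k+1)) = (l/(k+1)) * ((l-(k+1))/(l-k))" by simp
    also have "\<dots> \<le> (l/(k+1)) * 1" using assms by (intro mult_left_mono) auto
    finally show "l/(l-k)*((l-(k+1))/(k+1)) \<le> l/(k+1)" by simp
  qed auto
  finally show ?thesis by (simp add: algebra_simps)
qed
lemma aux2: fixes x T l k :: real
  assumes "0 < x" "0 \<le> T" "T \<le> x * (l/(k+2-l))" "\<not> k+1 \<le> l" "k \<ge> 0" "l > 0"
  shows "T * ((k+1)/l*x) \<le> (T + x) * x"
proof -
  have d: "(k+1)/l*x - x = x * ((k+1-l)/l)" using assms by (simp add: field_simps)
  have "T * ((k+1)/l*x - x) \<le> (x * (l/(k+2-l))) * (x * ((k+1-l)/l))"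
    unfolding d using assms by (intro mult_right_mono mult_nonneg_nonneg) auto
  also have "\<dots> = (x*x) * ((k+1-l)/(k+2-l))"
  proof -
    have "l/(k+2-l) * ((k+1-l)/l) = (k+1-l)/(k+2-l)" using assms by simp
    then show ?thesis using assms by simp
  qed
  also have "\<dots> \<le> (x*x) * 1"
    using assms by (intro mult_left_mono) auto
  finally show ?thesis by (simp add: algebra_simps)
qed
lemma aux3: fixes r l k :: real assumes "r = l/(k+1)" "l < k+1" "k \<ge> 0" shows "r/(1-r) = l/(k+1-l)"
proof -
  have "1 - r = (k+1-l)/(k+1)" using assms by (simp add: field_simps)
  then show ?thesis using assms by simp
qed

lemma tail_bound:
  assumes l: "l > 0" and k: "l < real k + 1"
  shows "1 - PF l k \<le> pp l k * (l / (real k + 1 - l))"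
proof -
  define r where "r = l / (real k + 1)"
  have r0: "0 < r" "r < 1" using l k by (auto simp: r_def field_simps)
  have step: "pp l (i + Suc k) \<le> pp l k * r ^ Suc i" for i
  proof (induction i)
    case 0
    then show ?case by (simp add: pp_Suc r_def mult.commute add.commute)
  next
    case (Suc i)
    have "pp l (Suc i + Suc k) = l / real (Suc (i + Suc k)) * pp l (i + Suc k)"
      using pp_Suc by simp
    also have "\<dots> \<le> r * pp l (i + Suc k)"
      unfolding r_def using l pp_pos[of l]
      by (intro mult_right_mono divide_left_mono) (auto simp: less_imp_le)
    also have "\<dots> \<le> r * (pp l k * r ^ Suc i)"
      using Suc r0 by (intro mult_left_mono) auto
    finally show ?case by (simp add: algebra_simps)
  qed
  have g: "(\<lambda>i. pp l k * r ^ Suc i) sums (pp l k * (r / (1 - r)))"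
  proof -
    have "(\<lambda>i. r ^ i) sums (1 / (1 - r))" using r0 by (intro geometric_sums) auto
    from sums_mult[OF this, of "pp l k * r"] show ?thesis by (simp add: field_simps)
  qed
  have "1 - PF l k \<le> pp l k * (r / (1 - r))"
    using sums_le[OF step tail_sums g] .
  also have "r / (1 - r) = l / (real k + 1 - l)"
    using aux3[OF r_def] k by simp
  finally show ?thesis .
qed

lemma head_bound:
  assumes l: "l > 0" and k: "real k < l"
  shows "PF l k \<le> pp l k * (l / (l - real k))"
  using k
proof (induction k)
  case 0
  then show ?case using l by (simp add: PF_0)
next
  case (Suc k)
  have ih: "PF l k \<le> pp l k * (l / (l - real k))" using Suc by simp
  have e: "pp l k = real (Suc k) / l * pp l (Suc k)" using pp_Suc'[of k l] l by (simp add: field_simps)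
  have "PF l (Suc k) \<le> pp l k * (l / (l - real k)) + pp l (Suc k)"
    using ih by (simp add: PF_Suc)
  also have "\<dots> = pp l (Suc k) * ((l + 1) / (l - real k))"
    using Suc.prems l unfolding e by (simp add: field_simps)
  also have "\<dots> \<le> pp l (Suc k) * (l / (l - real (Suc k)))"
  proof (rule mult_left_mono)
    show "(l + 1) / (l - real k) \<le> l / (l - real (Suc k))"
      using Suc.prems l by (simp add: field_simps)
    show "0 \<le> pp l (Suc k)" using pp_pos[OF l] by (simp add: less_imp_le)
  qed
  finally show ?case .
qed


lemma ratio_mono:
  assumes l: "l > 0"
  shows "PF l k * pp l (Suc k) \<le> PF l (Suc k) * pp l k"
proof (cases "real (Suc k) \<le> l")
  case False
  have "l * pp l k \<le> real (Suc k) * pp l k" using False pp_pos[OF l, of k]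
    by (intro mult_right_mono) auto
  then have "pp l (Suc k) \<le> pp l k" using l
    by (simp add: pp_Suc field_simps)
  then have "PF l k * pp l (Suc k) \<le> PF l k * pp l k"
    using PF_nonneg[OF l, of k] by (intro mult_left_mono) auto
  moreover have "0 \<le> pp l k * pp l (Suc k)" using pp_pos[OF l] by (simp add: less_imp_le)
  ultimately show ?thesis by (simp add: PF_Suc algebra_simps)
next
  case True
  have hb: "PF l k \<le> pp l k * (l / (l - real k))" using head_bound[OF l] True by simp
  have "PF l k * (l/(real k+1)*pp l k) \<le> (PF l k + l/(real k+1)*pp l k) * pp l k"
    using aux1[OF pp_pos[OF l] PF_nonneg[OF l] hb] True by simp
  then show ?thesis by (simp add: PF_Suc pp_Suc add.commute)
qed

lemma tail_ratio_mono:
  assumes l: "l > 0"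
  shows "(1 - PF l (Suc k)) * pp l k \<le> (1 - PF l k) * pp l (Suc k)"
proof (cases "real (Suc k) \<le> l")
  case True
  have "real (Suc k) * pp l k \<le> l * pp l k" using True pp_pos[OF l, of k]
    by (intro mult_right_mono) auto
  then have "pp l k \<le> pp l (Suc k)" using l
    by (simp add: pp_Suc field_simps)
  then have "(1 - PF l (Suc k)) * pp l k \<le> (1 - PF l (Suc k)) * pp l (Suc k)"
    using PF_le1[OF l, of "Suc k"] by (intro mult_left_mono) auto
  moreover have "0 \<le> pp l (Suc k) * pp l (Suc k)" using pp_pos[OF l] by (simp add: less_imp_le)
  moreover have "(1 - PF l k) * pp l (Suc k) = (1 - PF l (Suc k)) * pp l (Suc k) + pp l (Suc k) * pp l (Suc k)"
    by (simp add: PF_Suc algebra_simps)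
  ultimately show ?thesis by linarith
next
  case False
  have tb: "1 - PF l (Suc k) \<le> pp l (Suc k) * (l / (real k + 2 - l))"
    using tail_bound[OF l, of "Suc k"] False by (simp add: add.commute)
  have T0: "0 \<le> 1 - PF l (Suc k)" using PF_le1[OF l] by simp
  have e: "pp l k = (real k + 1) / l * pp l (Suc k)" using pp_Suc'[of k l] l by (simp add: field_simps)
  have "(1 - PF l (Suc k)) * ((real k+1)/l * pp l (Suc k)) \<le> ((1 - PF l (Suc k)) + pp l (Suc k)) * pp l (Suc k)"
    using aux2[OF pp_pos[OF l] T0 tb] False l by simp
  then show ?thesis unfolding e by (simp add: PF_Suc)
qed




definition SS :: "real \<Rightarrow> nat set \<Rightarrow> nat \<Rightarrow> real" where
  "SS l A k = (\<Sum>i\<le>k. (indicator A i - sum (pp l) A) * pp l i)"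

definition gg :: "real \<Rightarrow> nat set \<Rightarrow> nat \<Rightarrow> real" where
  "gg l A k = (if k = 0 then 0 else SS l A (k - 1) / (l * pp l (k - 1)))"

lemma gg_Suc: "gg l A (Suc k) = SS l A k / (l * pp l k)"
  unfolding gg_def by simp

lemma SS_Suc: "SS l A (Suc k) = SS l A k + (indicator A (Suc k) - sum (pp l) A) * pp l (Suc k)"
  unfolding SS_def by simp

lemma stein_eq:
  assumes l: "l > 0"
  shows "l * gg l A (Suc k) - real k * gg l A k = indicator A k - sum (pp l) A"
proof (cases k)
  case 0
  then show ?thesis using pp_pos[OF l, of 0] l by (simp add: gg_Suc SS_def)
next
  case (Suc j)
  have p: "pp l j > 0" "pp l (Suc j) > 0" using pp_pos[OF l] by auto
  have e: "real (Suc j) * pp l (Suc j) = l * pp l j" by (rule pp_Suc')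
  have "real k * gg l A k = real (Suc j) * (SS l A j / (l * pp l j))" using Suc by (simp add: gg_Suc)
  also have "\<dots> = SS l A j / pp l (Suc j)" unfolding e[symmetric] using p by simp
  finally have 1: "real k * gg l A k = SS l A j / pp l (Suc j)" .
  have 2: "l * gg l A (Suc k) = SS l A j / pp l (Suc j) + (indicator A (Suc j) - sum (pp l) A)"
    using Suc p l by (simp add: gg_Suc SS_Suc field_simps)
  show ?thesis using 1 2 Suc by simp
qed

lemma SS_single: "SS l {j} k = pp l j * ((if j \<le> k then 1 else 0) - PF l k)"
proof -
  have "SS l {j} k = (\<Sum>i\<le>k. indicator {j} i * pp l i) - pp l j * PF l k"
    unfolding SS_def PF_def by (simp add: algebra_simps sum_subtractf sum_distrib_left)
  also have "(\<Sum>i\<le>k. indicator {j} i * pp l i) = (if j \<le> k then pp l j else 0)"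
    by (simp add: indicator_def sum.delta' if_distrib[of "\<lambda>x. x * _"] cong: if_cong)
  finally show ?thesis by (simp add: algebra_simps)
qed

lemma SS_linear: "finite A \<Longrightarrow> SS l A k = (\<Sum>j\<in>A. SS l {j} k)"
proof -
  assume fA: "finite A"
  have "SS l A k = (\<Sum>i\<le>k. indicator A i * pp l i) - sum (pp l) A * PF l k"
    unfolding SS_def PF_def by (simp add: algebra_simps sum_subtractf sum_distrib_left)
  also have "(\<Sum>i\<le>k. indicator A i * pp l i) = (\<Sum>j\<in>A. if j \<le> k then pp l j else 0)"
  proof -
    have "(\<Sum>i\<le>k. indicator A i * pp l i) = (\<Sum>i\<in>A \<inter> {..k}. pp l i)"
      by (simp add: indicator_def if_distrib[of "\<lambda>x. x * _"] sum.If_cases Int_commute)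
    also have "\<dots> = (\<Sum>j\<in>A. if j \<le> k then pp l j else 0)"
      using fA by (simp add: sum.If_cases Int_def conj_commute)
    finally show ?thesis .
  qed
  finally have "SS l A k = (\<Sum>j\<in>A. if j \<le> k then pp l j else 0) - sum (pp l) A * PF l k" .
  also have "\<dots> = (\<Sum>j\<in>A. SS l {j} k)"
    unfolding SS_single by (simp add: algebra_simps sum_subtractf sum_distrib_right sum_distrib_left if_distrib[of "\<lambda>x. _ * x"] mult.commute cong: if_cong)
  finally show ?thesis .
qed

lemma gg_linear: "finite A \<Longrightarrow> gg l A k = (\<Sum>j\<in>A. gg l {j} k)"
  unfolding gg_def using SS_linear[of A l] by (simp add: sum_divide_distrib)

definition DD where "DD l A k = gg l A (Suc k) - gg l A k"

lemma DD_linear: "finite A \<Longrightarrow> DD l A k = (\<Sum>j\<in>A. DD l {j} k)"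
  unfolding DD_def using gg_linear[of A l] by (simp add: sum_subtractf)

lemma DD_Suc: "DD l A (Suc n) = SS l A (Suc n) / (l * pp l (Suc n)) - SS l A n / (l * pp l n)"
  unfolding DD_def gg_Suc by simp

lemma DD_single_neg:
  assumes l: "l > 0" and j: "j \<noteq> Suc n"
  shows "DD l {j} (Suc n) \<le> 0"
proof -
  have p: "pp l n > 0" "pp l (Suc n) > 0" "pp l j > 0" using pp_pos[OF l] by auto
  show ?thesis
  proof (cases "j > Suc n")
    case True
    have "DD l {j} (Suc n) = pp l j / l * (PF l n / pp l n - PF l (Suc n) / pp l (Suc n))"
      unfolding DD_Suc SS_single using True l p by (simp add: field_simps)
    moreover have "PF l n / pp l n - PF l (Suc n) / pp l (Suc n) \<le> 0"
      using ratio_mono[OF l, of n] p by (simp add: field_simps)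
    ultimately show ?thesis using p l by (metis divide_pos_pos less_imp_le mult_nonneg_nonpos diff_le_0_iff_le)
  next
    case False
    then have jn: "j \<le> n" using j by simp
    have "DD l {j} (Suc n) = pp l j / l * ((1 - PF l (Suc n)) / pp l (Suc n) - (1 - PF l n) / pp l n)"
      unfolding DD_Suc SS_single using jn l p by (simp add: field_simps)
    moreover have "(1 - PF l (Suc n)) / pp l (Suc n) - (1 - PF l n) / pp l n \<le> 0"
      using tail_ratio_mono[OF l, of n] p by (simp add: field_simps)
    ultimately show ?thesis using p l by (metis divide_pos_pos less_imp_le mult_nonneg_nonpos)
  qed
qed

lemma PF_shift_bound:
  assumes l: "l > 0"
  shows "l / (real n + 1) * PF l n \<le> PF l (Suc n) - pp l 0"
proof -
  have "l / (real n + 1) * PF l n = (\<Sum>i\<le>n. l / (real n + 1) * pp l i)"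
    unfolding PF_def by (simp add: sum_distrib_left)
  also have "\<dots> \<le> (\<Sum>i\<le>n. pp l (Suc i))"
  proof (rule sum_mono)
    fix i assume "i \<in> {..n}"
    then have "l / (real n + 1) \<le> l / (real i + 1)" using l by (intro divide_left_mono) auto
    then have "l / (real n + 1) * pp l i \<le> l / (real i + 1) * pp l i"
      using pp_pos[OF l, of i] by (intro mult_right_mono) auto
    then show "l / (real n + 1) * pp l i \<le> pp l (Suc i)" by (simp add: pp_Suc add.commute)
  qed
  also have "\<dots> = PF l (Suc n) - pp l 0"
  proof -
    have "PF l (Suc n) = pp l 0 + (\<Sum>i\<le>n. pp l (Suc i))" unfolding PF_def by (rule sum.atMost_Suc_shift)
    then show ?thesis by simp
  qed
  finally show ?thesis .
qed

lemma DD_single_diag: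
  assumes l: "l > 0"
  shows "0 \<le> DD l {Suc n} (Suc n)" "DD l {Suc n} (Suc n) \<le> (1 - exp (- l)) / l"
proof -
  have p: "pp l n > 0" "pp l (Suc n) > 0" using pp_pos[OF l] by auto
  have e: "pp l (Suc n) / pp l n = l / (real n + 1)" using p by (simp add: pp_Suc)
  have D0: "DD l {Suc n} (Suc n) = (1 - PF l (Suc n))/l + (pp l (Suc n)/pp l n) * PF l n / l"
    unfolding DD_Suc SS_single using p l by (simp add: field_simps)
  have D: "DD l {Suc n} (Suc n) = ((1 - PF l (Suc n)) + l / (real n + 1) * PF l n) / l"
    unfolding D0 e by (simp add: add_divide_distrib)
  show "0 \<le> DD l {Suc n} (Suc n)" unfolding D using PF_le1[OF l] PF_nonneg[OF l] l by simp
  have "(1 - PF l (Suc n)) + l / (real n + 1) * PF l n \<le> 1 - pp l 0"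
    using PF_shift_bound[OF l, of n] by simp
  also have "pp l 0 = exp (- l)" unfolding poisson_pmf_fun_def by simp
  finally show "DD l {Suc n} (Suc n) \<le> (1 - exp (- l)) / l" unfolding D using l
    by (simp add: divide_right_mono)
qed

lemma DD_full_nonneg:
  assumes l: "l > 0" and nN: "Suc n \<le> N"
  shows "0 \<le> DD l {..N} (Suc n)"
proof -
  have p: "pp l n > 0" "pp l (Suc n) > 0" using pp_pos[OF l] by auto
  have S: "SS l {..N} x = (1 - PF l N) * PF l x" if "x \<le> N" for x
  proof -
    have "SS l {..N} x = (\<Sum>i\<le>x. (1 - PF l N) * pp l i)"
      unfolding SS_def PF_def by (rule sum.cong) (use that in auto)
    then show ?thesis by (simp add: sum_distrib_left PF_def)
  qed
  have S1: "SS l {..N} (Suc n) = (1 - PF l N) * PF l (Suc n)" using S nN by simp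
  have S2: "SS l {..N} n = (1 - PF l N) * PF l n" using S nN by simp
  have "DD l {..N} (Suc n) = (1 - PF l N) / l * (PF l (Suc n) / pp l (Suc n) - PF l n / pp l n)"
    unfolding DD_Suc S1 S2 using l p by (simp add: field_simps)
  moreover have "0 \<le> PF l (Suc n) / pp l (Suc n) - PF l n / pp l n"
    using ratio_mono[OF l, of n] p by (simp add: field_simps)
  moreover have "0 \<le> (1 - PF l N) / l" using PF_le1[OF l] l by simp
  ultimately show ?thesis by (metis mult_nonneg_nonneg)
qed

lemma DD_bound:
  assumes l: "l > 0" and A: "A \<subseteq> {..N}" and k: "1 \<le> k" "k \<le> N"
  shows "\<bar>DD l A k\<bar> \<le> (1 - exp (- l)) / l"
proof -
  obtain n where kn: "k = Suc n" using k by (cases k) auto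
  have fA: "finite A" using A finite_subset by blast
  have neg: "\<And>j. j \<noteq> k \<Longrightarrow> DD l {j} k \<le> 0" using DD_single_neg[OF l] kn by blast
  have dg: "0 \<le> DD l {k} k" "DD l {k} k \<le> (1 - exp (- l)) / l"
    using DD_single_diag[OF l] kn by auto
  have split: "DD l A k = (\<Sum>j\<in>A \<inter> {k}. DD l {j} k) + (\<Sum>j\<in>A - {k}. DD l {j} k)"
  proof -
    have "A = (A \<inter> {k}) \<union> (A - {k})" by blast
    then have "(\<Sum>j\<in>A. DD l {j} k) = (\<Sum>j\<in>(A \<inter> {k}) \<union> (A - {k}). DD l {j} k)" by simp
    also have "\<dots> = (\<Sum>j\<in>A \<inter> {k}. DD l {j} k) + (\<Sum>j\<in>A - {k}. DD l {j} k)"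
      using fA by (intro sum.union_disjoint) auto
    finally show ?thesis unfolding DD_linear[OF fA] .
  qed
  have s1: "0 \<le> (\<Sum>j\<in>A \<inter> {k}. DD l {j} k)" "(\<Sum>j\<in>A \<inter> {k}. DD l {j} k) \<le> DD l {k} k"
    using dg by (cases "k \<in> A"; simp add: Int_insert_right)+
  have s2: "(\<Sum>j\<in>A - {k}. DD l {j} k) \<le> 0"
    using neg by (intro sum_nonpos) auto
  have s3: "(\<Sum>j\<in>{..N} - {k}. DD l {j} k) \<le> (\<Sum>j\<in>A - {k}. DD l {j} k)"
  proof -
    have "(\<Sum>j\<in>A - {k}. - DD l {j} k) \<le> (\<Sum>j\<in>{..N} - {k}. - DD l {j} k)"
      using A neg by (intro sum_mono2) auto
    then show ?thesis by (simp add: sum_negf)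
  qed
  have s4: "DD l {..N} k = (\<Sum>j\<in>{..N} - {k}. DD l {j} k) + DD l {k} k"
  proof -
    have "k \<in> {..N}" using k by simp
    from sum.remove[OF finite_atMost this, of "\<lambda>j. DD l {j} k"]
    show ?thesis unfolding DD_linear[OF finite_atMost] by (simp add: add.commute)
  qed
  have s5: "0 \<le> DD l {..N} k" using DD_full_nonneg[OF l] k kn by simp
  show ?thesis using split s1 s2 s3 s4 s5 dg by linarith
qed





lemma ln_lower_2x:
  assumes x: "0 \<le> (x::real)"
  shows "2 * x / (2 + x) \<le> ln (1 + x)"
proof -
  let ?f = "\<lambda>t::real. ln (1 + t) - 2 * t / (2 + t)"
  have "?f 0 \<le> ?f x"
  proof (rule DERIV_nonneg_imp_nondecreasing[OF x])
    fix t :: real assume t: "0 \<le> t" "t \<le> x"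
    have "(?f has_real_derivative (1 / (1 + t) - 4 / (2 + t)^2)) (at t)"
      using t apply (auto intro!: derivative_eq_intros)
      apply (simp add: divide_simps power2_eq_square)
      done
    moreover have "0 \<le> 1 / (1 + t) - 4 / (2 + t)^2"
    proof -
      have "1 / (1 + t) - 4 / (2 + t)^2 = t^2 / ((1 + t) * (2 + t)^2)"
      proof -
        have "1 + t > 0" "2 + t > 0" using t by auto
        then show ?thesis by (simp add: divide_simps power2_eq_square) algebra
      qed
      also have "\<dots> \<ge> 0" using t by simp
      finally show ?thesis .
    qed
    ultimately show "\<exists>y. (?f has_real_derivative y) (at t) \<and> 0 \<le> y" by blast
  qed
  then show ?thesis by simp
qed

lemma ln_fact_bound:
  assumes "1 \<le> k"
  shows "ln (fact k) \<le> 1 + (real k + 1/2) * ln (real k) - real k"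
  using assms
proof (induction k rule: dec_induct)
  case base
  then show ?case by simp
next
  case (step k)
  have k: "real k \<ge> 1" using step by simp
  have key: "1 \<le> (real k + 1/2) * (ln (real k + 1) - ln (real k))"
  proof -
    have q: "1 + 1 / real k = (real k + 1) / real k" using k by (simp add: field_simps)
    have "ln (real k + 1) - ln (real k) = ln (1 + 1 / real k)"
      unfolding q using k by (subst ln_div) auto
    also have "\<dots> \<ge> 2 * (1 / real k) / (2 + 1 / real k)" using k by (intro ln_lower_2x) simp
    finally have "(real k + 1/2) * (2 * (1 / real k) / (2 + 1 / real k)) \<le> (real k + 1/2) * (ln (real k + 1) - ln (real k))"
      using k by (intro mult_left_mono) auto
    moreover have "(real k + 1/2) * (2 * (1 / real k) / (2 + 1 / real k)) = 1"
      using k by (simp add: field_simps)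
    ultimately show ?thesis by simp
  qed
  have "ln (fact (Suc k)) = ln (real k + 1) + ln (fact k)"
    by (simp add: ln_mult add.commute)
  also have "\<dots> \<le> ln (real k + 1) + 1 + (real k + 1/2) * ln (real k) - real k"
    using step by simp
  also have "\<dots> \<le> 1 + (real (Suc k) + 1/2) * ln (real (Suc k)) - real (Suc k)"
    using key by (simp add: algebra_simps)
  finally show ?case .
qed

lemma exp_le_4sq:
  assumes "1 \<le> (l::real)" "l \<le> 2"
  shows "exp l \<le> 4 * l^2"
proof -
  have e: "exp 1 \<le> (272/100::real)" using e_less_272 by simp
  have ex: "exp (1 + x) \<le> 272/100 * (1 + x + x^2)" if "0 \<le> x" "x \<le> 1" for x :: real
  proof -
    have "exp (1 + x) = exp 1 * exp x" by (simp add: exp_add)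
    also have "\<dots> \<le> 272/100 * (1 + x + x^2)"
      using e exp_bound[OF that] by (intro mult_mono) auto
    finally show ?thesis .
  qed
  consider "l \<le> 6/5" | "6/5 \<le> l" "l \<le> 3/2" | "3/2 \<le> l" using assms by linarith
  then show ?thesis
  proof cases
    case 1
    have "exp l \<le> exp (1 + 1/5)" using 1 by simp
    also have "\<dots> \<le> 272/100 * (1 + 1/5 + (1/5)^2)" by (rule ex) auto
    also have "\<dots> \<le> 4 * 1" by (simp add: power2_eq_square)
    also have "\<dots> \<le> 4 * l^2" using assms by simp
    finally show ?thesis .
  next
    case 2
    have "exp l \<le> exp (1 + 1/2)" using 2 by simp
    also have "\<dots> \<le> 272/100 * (1 + 1/2 + (1/2)^2)" by (rule ex) auto
    also have "\<dots> \<le> 4 * (6/5)^2" by (simp add: power2_eq_square)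
    also have "\<dots> \<le> 4 * l^2" using 2 by (intro mult_left_mono power_mono) auto
    finally show ?thesis .
  next
    case 3
    have "exp l \<le> exp (1 + 1)" using 3 assms by simp
    also have "\<dots> \<le> 272/100 * (1 + 1 + 1^2)" by (rule ex) auto
    also have "\<dots> \<le> 4 * (3/2)^2" by (simp add: power2_eq_square)
    also have "\<dots> \<le> 4 * l^2" using 3 by (intro mult_left_mono power_mono) auto
    finally show ?thesis .
  qed
qed

lemma ln56: "1 + 25/49 + 13/200 \<le> ln (28/5::real)"
proof -
  have e: "exp 1 \<le> (272/100::real)" using e_less_272 by simp
  let ?x = "(1/2 + 13/200 + 25/49 - 1/2) :: real"
  have "exp (1 + 25/49 + 13/200 :: real) = exp 1 * exp (25/49 + 13/200)" by (simp add: exp_add[symmetric])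
  also have "\<dots> \<le> 272/100 * (1 + (25/49 + 13/200) + (25/49 + 13/200)^2)"
    using e exp_bound[of "25/49 + 13/200"] by (intro mult_mono) auto
  also have "\<dots> \<le> 28/5" by (simp add: power2_eq_square)
  finally have "ln (exp (1 + 25/49 + 13/200 :: real)) \<le> ln (28/5)"
    by (subst ln_le_cancel_iff) auto
  then show ?thesis by simp
qed



lemma SS_abs:
  assumes l: "l > 0" and fA: "finite A"
  shows "\<bar>SS l A k\<bar> \<le> PF l k * (1 - PF l k)"
proof -
  define x where "x = sum (pp l) (A \<inter> {..k})"
  define y where "y = sum (pp l) (A - {..k})"
  have pn: "\<And>i. 0 \<le> pp l i" using pp_pos[OF l] less_imp_le by blast
  have s1: "(\<Sum>i\<le>k. indicator A i * pp l i) = x"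
    unfolding x_def by (simp add: indicator_def if_distrib[of "\<lambda>x. x * _"] sum.If_cases Int_commute)
  have s2: "sum (pp l) A = x + y"
    unfolding x_def y_def using fA by (subst sum.union_disjoint[symmetric]) (auto intro: sum.cong)
  have SSe: "SS l A k = x * (1 - PF l k) - y * PF l k"
  proof -
    have "SS l A k = (\<Sum>i\<le>k. indicator A i * pp l i) - sum (pp l) A * PF l k"
      unfolding SS_def PF_def by (simp add: algebra_simps sum_subtractf sum_distrib_left)
    then show ?thesis unfolding s1 s2 by (simp add: algebra_simps)
  qed
  have x0: "0 \<le> x" unfolding x_def using pn by (simp add: sum_nonneg)
  have y0: "0 \<le> y" unfolding y_def using pn by (simp add: sum_nonneg)
  have xF: "x \<le> PF l k" unfolding x_def PF_def using pn by (intro sum_mono2) auto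
  have yF: "y + PF l k \<le> 1"
  proof -
    have "y + PF l k = sum (pp l) ((A - {..k}) \<union> {..k})"
      unfolding y_def PF_def using fA by (subst sum.union_disjoint) auto
    also have "\<dots> \<le> 1" using fA by (intro sum_pp_le1[OF l]) auto
    finally show ?thesis .
  qed
  have F0: "0 \<le> PF l k" "PF l k \<le> 1" using PF_nonneg[OF l] PF_le1[OF l] by auto
  have a1: "0 \<le> x * (1 - PF l k)" "x * (1 - PF l k) \<le> PF l k * (1 - PF l k)"
    using x0 xF F0 by (auto intro: mult_right_mono)
  have a2: "0 \<le> y * PF l k" "y * PF l k \<le> (1 - PF l k) * PF l k"
    using y0 yF F0 by (auto intro: mult_right_mono)
  show ?thesis unfolding SSe using a1 a2 by (simp add: abs_le_iff algebra_simps)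
qed

lemma Fquarter: "(F::real) * (1 - F) \<le> 1/4"
proof -
  have "0 \<le> (F - 1/2)^2" by simp
  then show ?thesis by (simp add: power2_eq_square algebra_simps)
qed

lemma small_case:
  assumes l: "l > 0" "l \<le> 2"
  shows "PF l k * (1 - PF l k) \<le> l * pp l k"
proof -
  have F0: "0 \<le> PF l k" "PF l k \<le> 1" using PF_nonneg[OF l(1)] PF_le1[OF l(1)] by auto
  have p: "pp l k > 0" using pp_pos[OF l(1)] .
  consider "k = 0" | "real k \<ge> l" | "k = 1" "1 < l" using l by (cases k) (auto, linarith)
  then show ?thesis
  proof cases
    case 1
    have e: "PF l k = exp (- l)" "pp l k = exp (- l)" using 1 by (auto simp: PF_0 poisson_pmf_fun_def)
    have "1 - exp (- l) \<le> l" using exp_ge_add_one_self[of "- l"] by simp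
    then show ?thesis unfolding e by (simp add: mult.commute mult_left_mono)
  next
    case 2
    have "1 - PF l k \<le> pp l k * (l / (real k + 1 - l))" using tail_bound[OF l(1)] 2 by simp
    also have "\<dots> \<le> pp l k * l"
    proof (rule mult_left_mono)
      show "l / (real k + 1 - l) \<le> l" using 2 l by (simp add: divide_le_eq mult_le_cancel_left1)
    qed (use p in simp)
    finally have "1 - PF l k \<le> l * pp l k" by (simp add: mult.commute)
    moreover have "PF l k * (1 - PF l k) \<le> 1 - PF l k" using F0 by (simp add: mult_left_le_one_le)
    ultimately show ?thesis by linarith
  next
    case 3
    have "exp l \<le> 4 * l^2" using exp_le_4sq 3 l by simp
    then have "1/4 \<le> l * pp l 1" unfolding poisson_pmf_fun_def
      by (simp add: exp_minus field_simps power2_eq_square)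
    then show ?thesis using Fquarter[of "PF l k"] 3 by simp
  qed
qed

lemma ln_pp_lower:
  assumes l: "l > 0" and k: "1 \<le> k"
  shows "- ((real k - l)^2 / l) - 1 - ln (real k) / 2 \<le> ln (pp l k)"
proof -
  have kr: "real k > 0" using k by simp
  have lp: "ln (pp l k) = - l + real k * ln l - ln (fact k)"
    unfolding poisson_pmf_fun_def using l
    by (simp add: ln_mult ln_div ln_realpow)
  have lk: "1 - real k / l \<le> ln l - ln (real k)"
  proof -
    have "ln (real k / l) \<le> real k / l - 1" using ln_le_minus_one[of "real k / l"] kr l by simp
    then show ?thesis using kr l by (simp add: ln_div)
  qed
  have "real k * (1 - real k / l) \<le> real k * (ln l - ln (real k))"
    using lk kr by (intro mult_left_mono) auto
  moreover have "ln (fact k) \<le> 1 + (real k + 1/2) * ln (real k) - real k" using ln_fact_bound k by simp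
  moreover have "- ((real k - l)^2 / l) = real k * (1 - real k / l) + real k - l"
    using l by (simp add: field_simps power2_eq_square)
  ultimately show ?thesis unfolding lp by (simp add: algebra_simps)
qed

lemma large_case:
  assumes l: "l \<ge> 1.96"
  shows "PF l k * (1 - PF l k) \<le> 7/5 * sqrt l * pp l k"
proof -
  define s where "s = sqrt l"
  have l0: "l > 0" using l by simp
  have ss: "s * s = l" "s > 0" unfolding s_def using l0 by auto
  have s14: "s \<ge> 7/5"
  proof -
    have "sqrt ((7/5)^2) \<le> sqrt l" using l by (intro real_sqrt_le_mono) (simp add: power2_eq_square)
    then show ?thesis unfolding s_def by simp
  qed
  have ls: "l / s = s" using ss by (simp add: field_simps)
  have F0: "0 \<le> PF l k" "PF l k \<le> 1" using PF_nonneg[OF l0] PF_le1[OF l0] by auto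
  have p: "pp l k > 0" using pp_pos[OF l0] .
  consider "l - real k \<ge> 5/7 * s" | "real k + 1 - l \<ge> 5/7 * s" | "l - real k < 5/7 * s" "real k + 1 - l < 5/7 * s"
    by linarith
  then show ?thesis
  proof cases
    case 1
    have kl: "real k < l" using 1 ss by simp
    have "PF l k \<le> pp l k * (l / (l - real k))" using head_bound[OF l0 kl] .
    also have "\<dots> \<le> pp l k * (l / (5/7 * s))"
      using 1 p l0 ss by (intro mult_left_mono divide_left_mono) auto
    also have "\<dots> = 7/5 * s * pp l k" using ss by (simp add: field_simps)
    finally have "PF l k \<le> 7/5 * s * pp l k" .
    moreover have "PF l k * (1 - PF l k) \<le> PF l k" using F0 by (simp add: mult_right_le_one_le)
    ultimately show ?thesis unfolding s_def by linarith
  next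
    case 2
    have kl: "l < real k + 1" using 2 ss by simp
    have "1 - PF l k \<le> pp l k * (l / (real k + 1 - l))" using tail_bound[OF l0 kl] .
    also have "\<dots> \<le> pp l k * (l / (5/7 * s))"
      using 2 p l0 ss by (intro mult_left_mono divide_left_mono) auto
    also have "\<dots> = 7/5 * s * pp l k" using ss by (simp add: field_simps)
    finally have "1 - PF l k \<le> 7/5 * s * pp l k" .
    moreover have "PF l k * (1 - PF l k) \<le> 1 - PF l k" using F0 by (simp add: mult_left_le_one_le)
    ultimately show ?thesis unfolding s_def by linarith
  next
    case 3
    have kpos: "real k > 0"
    proof -
      have "l - 5/7 * s = s * (s - 5/7)" using ss by (simp add: algebra_simps)
      also have "\<dots> > 0" using ss s14 by simp
      finally show ?thesis using 3 by linarith
    qed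
    then have k1: "1 \<le> k" by simp
    have sq: "(real k - l)^2 \<le> 25/49 * l"
    proof -
      have "\<bar>real k - l\<bar> \<le> 5/7 * s" using 3 by linarith
      then have "\<bar>real k - l\<bar>^2 \<le> (5/7 * s)^2" by (intro power_mono) auto
      then show ?thesis using ss by (simp add: power2_eq_square)
    qed
    have k113: "real k / l - 1 \<le> 13/100"
    proof -
      have "0 \<le> (13/100) * (s - 250/91)^2" by simp
      then have "0 \<le> 13/100 * (s * s) - 5/7 * s + 8125/8281" by (simp add: power2_eq_square algebra_simps)
      then have "real k \<le> 113/100 * l" using 3 ss by linarith
      then show ?thesis using l0 by (simp add: field_simps)
    qed
    have lkl: "ln (real k) - ln l \<le> 13/100"
    proof -
      have "ln (real k / l) \<le> real k / l - 1" using ln_le_minus_one[of "real k / l"] kpos l0 by simp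
      then have "ln (real k) - ln l \<le> real k / l - 1" using kpos l0 by (simp add: ln_div)
      then show ?thesis using k113 by linarith
    qed
    have lp: "- ((real k - l)^2 / l) - 1 - ln (real k) / 2 \<le> ln (pp l k)" using ln_pp_lower[OF l0 k1] .
    have sqd: "(real k - l)^2 / l \<le> 25/49" using sq l0 by (simp add: divide_le_eq)
    have "ln (1/4) \<le> ln (7/5 * s * pp l k)"
    proof -
      have "ln (7/5 * s * pp l k) = ln (7/5) + ln l / 2 + ln (pp l k)"
      proof -
        have a: "ln ((7/5 * s) * pp l k) = ln (7/5 * s) + ln (pp l k)"
          by (rule ln_mult_pos) (use ss p in auto)
        have b: "ln ((7/5) * s) = ln (7/5) + ln s" by (rule ln_mult_pos) (use ss in auto)
        have "ln (7/5 * s * pp l k) = ln (7/5) + ln s + ln (pp l k)" using a b by simp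
        moreover have "ln s = ln l / 2" unfolding s_def using l0 by (simp add: ln_sqrt)
        ultimately show ?thesis by simp
      qed
      moreover have "ln (28/5) = ln (7/5) + ln (4::real)"
        using ln_mult_pos[of "7/5" "4::real"] by simp
      moreover have "ln (1/4) = - ln (4::real)" by (simp add: ln_div)
      ultimately show ?thesis using ln56 lp sqd lkl by (simp add: algebra_simps)
    qed
    then have "1/4 \<le> 7/5 * s * pp l k" using ss p by (subst (asm) ln_le_cancel_iff) auto
    then show ?thesis using Fquarter[of "PF l k"] unfolding s_def by linarith
  qed
qed

lemma gg_bound:
  assumes l: "l > 0" and fA: "finite A" and k: "1 \<le> k"
  shows "\<bar>gg l A k\<bar> \<le> min 1 (1.4 / sqrt l)"
proof -
  obtain n where kn: "k = Suc n" using k by (cases k) auto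
  have p: "pp l n > 0" using pp_pos[OF l] .
  have g: "\<bar>gg l A k\<bar> = \<bar>SS l A n\<bar> / (l * pp l n)"
    unfolding kn gg_Suc using l p by (simp add: abs_divide)
  have S: "\<bar>SS l A n\<bar> \<le> PF l n * (1 - PF l n)" by (rule SS_abs[OF l fA])
  show ?thesis
  proof (cases "l \<le> 1.96")
    case True
    have m: "min 1 (1.4 / sqrt l) = 1"
    proof -
      have "sqrt l \<le> sqrt ((7/5)^2)" using True by (intro real_sqrt_le_mono) (simp add: power2_eq_square)
      then have "sqrt l \<le> 1.4" by simp
      then show ?thesis using l by (simp add: min_def field_simps)
    qed
    have "\<bar>SS l A n\<bar> \<le> l * pp l n" using S small_case[OF l, of n] True by simp
    then show ?thesis unfolding g m using l p by (simp add: divide_le_eq)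
  next
    case False
    have m: "min 1 (1.4 / sqrt l) = 1.4 / sqrt l"
    proof -
      have "sqrt ((7/5)^2) \<le> sqrt l" using False by (intro real_sqrt_le_mono) (simp add: power2_eq_square)
      then have "1.4 \<le> sqrt l" by simp
      then show ?thesis using l by (simp add: min_def field_simps)
    qed
    have "\<bar>SS l A n\<bar> \<le> 7/5 * sqrt l * pp l n" using S large_case[of l n] False by simp
    also have "7/5 * sqrt l * pp l n = (1.4 / sqrt l) * (l * pp l n)"
    proof -
      have "(1.4 / sqrt l) * (l * pp l n) = 1.4 * (l / sqrt l) * pp l n" by simp
      also have "l / sqrt l = sqrt l" using l by (simp add: real_div_sqrt)
      finally show ?thesis by simp
    qed
    finally show ?thesis unfolding g m using l p by (simp add: divide_le_eq)
  qed
qed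




lemma gg_lip:
  assumes l: "l > 0" and A: "A \<subseteq> {..m}" and a: "1 \<le> a" "a \<le> b"
  shows "\<bar>gg l A b - gg l A a\<bar> \<le> (1 - exp (- l)) / l * real (b - a)"
  using a(2)
proof (induction b rule: dec_induct)
  case base
  then show ?case by simp
next
  case (step b)
  have "\<bar>DD l A b\<bar> \<le> (1 - exp (- l)) / l"
    by (rule DD_bound[OF l, of A "max m b"]) (use A a step in auto)
  then have "\<bar>gg l A (Suc b) - gg l A b\<bar> \<le> (1 - exp (- l)) / l" unfolding DD_def .
  moreover have "real (Suc b - a) = real (b - a) + 1" using step by simp
  moreover have "\<bar>gg l A (Suc b) - gg l A a\<bar> \<le> \<bar>gg l A (Suc b) - gg l A b\<bar> + \<bar>gg l A b - gg l A a\<bar>"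
    using abs_triangle_ineq[of "gg l A (Suc b) - gg l A b" "gg l A b - gg l A a"] by simp
  ultimately show ?case using step.IH by (simp add: distrib_left)
qed

lemma meas_nat_fun:
  fixes f :: "nat \<Rightarrow> real" and Y :: "'a \<Rightarrow> real"
  assumes "Y \<in> borel_measurable N"
  shows "(\<lambda>x. f (nat \<lfloor>Y x\<rfloor>)) \<in> borel_measurable N"
proof -
  have "(\<lambda>x. \<lfloor>Y x\<rfloor>) \<in> measurable N (count_space UNIV)"
    by (rule measurable_compose[OF assms measurable_real_floor])
  moreover have "(\<lambda>i::int. f (nat i)) \<in> measurable (count_space UNIV) borel" by simp
  ultimately show ?thesis by (rule measurable_compose[of _ _ _ "\<lambda>i. f (nat i)", simplified])
qed

locale CSset = prob_space M for M :: "'a measure" +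
  fixes I :: "'i set" and X :: "'i \<Rightarrow> 'a \<Rightarrow> real" and B :: "'i \<Rightarrow> 'i set"
  assumes finI: "finite I"
    and Xm: "\<And>\<alpha>. \<alpha> \<in> I \<Longrightarrow> X \<alpha> \<in> borel_measurable M"
    and X01: "\<And>\<alpha> x. \<alpha> \<in> I \<Longrightarrow> x \<in> space M \<Longrightarrow> X \<alpha> x \<in> {0, 1}"
    and Bp: "\<And>\<alpha>. \<alpha> \<in> I \<Longrightarrow> \<alpha> \<in> B \<alpha> \<and> B \<alpha> \<subseteq> I"
begin

definition pX :: "'i \<Rightarrow> real" where "pX \<alpha> = measure M {x \<in> space M. X \<alpha> x = 1}"
definition cnt :: "'i set \<Rightarrow> 'a \<Rightarrow> nat" where "cnt S x = card {\<alpha> \<in> S. X \<alpha> x = 1}"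
definition SX :: "'i set \<Rightarrow> 'a \<Rightarrow> real" where "SX S x = (\<Sum>\<alpha>\<in>S. X \<alpha> x)"

lemma SX_cnt:
  assumes S: "S \<subseteq> I" and x: "x \<in> space M"
  shows "SX S x = real (cnt S x)"
proof -
  have fS: "finite S" using S finI finite_subset by blast
  have "SX S x = (\<Sum>\<alpha>\<in>S. if X \<alpha> x = 1 then 1 else 0)"
    unfolding SX_def using X01 S x by (intro sum.cong) auto
  also have "\<dots> = real (card {\<alpha> \<in> S. X \<alpha> x = 1})"
    using fS by (simp add: sum.If_cases Int_def conj_commute)
  finally show ?thesis unfolding cnt_def .
qed

lemma SX_meas: "S \<subseteq> I \<Longrightarrow> SX S \<in> borel_measurable M"
  unfolding SX_def using Xm by (intro borel_measurable_sum) auto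

lemma nat_SX: "S \<subseteq> I \<Longrightarrow> x \<in> space M \<Longrightarrow> nat \<lfloor>SX S x\<rfloor> = cnt S x"
  using SX_cnt by simp

lemma int_bounded:
  fixes C :: real
  assumes "f \<in> borel_measurable M" "\<And>x. x \<in> space M \<Longrightarrow> \<bar>f x\<bar> \<le> C"
  shows "integrable M f"
  using assms by (intro integrable_const_bound[where B = C]) (auto intro: AE_I2)

lemma X_abs: "\<alpha> \<in> I \<Longrightarrow> x \<in> space M \<Longrightarrow> \<bar>X \<alpha> x\<bar> \<le> 1"
  using X01 by fastforce

lemma X_int: "\<alpha> \<in> I \<Longrightarrow> integrable M (X \<alpha>)"
  using Xm X_abs by (intro int_bounded) auto

lemma X_indicator: "\<alpha> \<in> I \<Longrightarrow> x \<in> space M \<Longrightarrow> X \<alpha> x = indicator {x \<in> space M. X \<alpha> x = 1} x"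
  using X01 by (auto simp: indicator_def)

lemma X_expect: "\<alpha> \<in> I \<Longrightarrow> integral\<^sup>L M (X \<alpha>) = pX \<alpha>"
proof -
  assume a: "\<alpha> \<in> I"
  have "integral\<^sup>L M (X \<alpha>) = integral\<^sup>L M (indicator {x \<in> space M. X \<alpha> x = 1})"
    using X_indicator[OF a] by (rule Bochner_Integration.integral_cong[OF refl])
  also have "\<dots> = pX \<alpha>" unfolding pX_def by (simp add: Int_absorb2 Collect_conj_eq Int_commute)
  finally show ?thesis .
qed

lemma cnt_le: "S \<subseteq> I \<Longrightarrow> cnt S x \<le> card I"
  unfolding cnt_def using finI by (intro card_mono) auto

end


lemma abs_int_bound:
  fixes f g :: "'a \<Rightarrow> real"
  assumes "integrable M f" "integrable M g" "\<And>x. x \<in> space M \<Longrightarrow> \<bar>f x\<bar> \<le> g x"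
  shows "\<bar>integral\<^sup>L M f\<bar> \<le> integral\<^sup>L M g"
proof -
  have "\<bar>integral\<^sup>L M f\<bar> \<le> integral\<^sup>L M (\<lambda>x. \<bar>f x\<bar>)"
    using integral_norm_bound[of M f] by simp
  also have "\<dots> \<le> integral\<^sup>L M g" using assms by (intro integral_mono) auto
  finally show ?thesis .
qed

lemma gg_bound_all:
  assumes l: "l > 0" and fA: "finite A"
  shows "\<bar>gg l A k\<bar> \<le> min 1 (1.4 / sqrt l)"
proof (cases "k = 0")
  case True
  have "0 \<le> min 1 (1.4 / sqrt l)" using l by simp
  then show ?thesis using True by (simp add: gg_def)
qed (use gg_bound[OF l fA] in auto)

context CSset
begin

definition GS :: "'i \<Rightarrow> 'a measure" where "GS \<alpha> = gen_sigma M (I - B \<alpha>) X"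

lemma GS_gen_sub: "{X j -` A \<inter> space M | j A. j \<in> I - B \<alpha> \<and> A \<in> sets borel} \<subseteq> Pow (space M)"
  by auto

lemma GS_space: "space (GS \<alpha>) = space M"
  unfolding GS_def gen_sigma_def using GS_gen_sub by (simp add: space_measure_of)

lemma GS_sets: "sets (GS \<alpha>) = sigma_sets (space M) {X j -` A \<inter> space M | j A. j \<in> I - B \<alpha> \<and> A \<in> sets borel}"
  unfolding GS_def gen_sigma_def using GS_gen_sub by (simp add: sets_measure_of)

lemma GS_subalg: "subalgebra M (GS \<alpha>)"
proof -
  have "{X j -` A \<inter> space M | j A. j \<in> I - B \<alpha> \<and> A \<in> sets borel} \<subseteq> sets M"
    using Xm measurable_sets by blast
  then have "sets (GS \<alpha>) \<subseteq> sets M" unfolding GS_sets by (simp add: sigma_sets_le_sets_iff)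
  then show ?thesis unfolding subalgebra_def GS_space by simp
qed

lemma GS_sfs: "sigma_finite_subalgebra M (GS \<alpha>)"
proof -
  have "finite_measure_subalgebra M (GS \<alpha>)"
    unfolding finite_measure_subalgebra_def finite_measure_subalgebra_axioms_def
    using GS_subalg finite_measure_axioms by simp
  then show ?thesis by (rule finite_measure_subalgebra_is_sigma_finite)
qed

lemma X_GS_meas: "\<beta> \<in> I - B \<alpha> \<Longrightarrow> X \<beta> \<in> borel_measurable (GS \<alpha>)"
proof (rule measurableI)
  fix A :: "real set" assume "\<beta> \<in> I - B \<alpha>" "A \<in> sets borel"
  then have "X \<beta> -` A \<inter> space M \<in> {X j -` A \<inter> space M | j A. j \<in> I - B \<alpha> \<and> A \<in> sets borel}" by blast
  then show "X \<beta> -` A \<inter> space (GS \<alpha>) \<in> sets (GS \<alpha>)" unfolding GS_sets GS_space by blast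
qed simp

lemma SX_GS_meas: "\<alpha> \<in> I \<Longrightarrow> SX (I - B \<alpha>) \<in> borel_measurable (GS \<alpha>)"
  unfolding SX_def using X_GS_meas by (intro borel_measurable_sum) auto

lemma cnt_split:
  assumes a: "\<alpha> \<in> I"
  shows "cnt I x = cnt (I - B \<alpha>) x + cnt (B \<alpha>) x"
proof -
  have "{\<beta> \<in> I. X \<beta> x = 1} = {\<beta> \<in> I - B \<alpha>. X \<beta> x = 1} \<union> {\<beta> \<in> B \<alpha>. X \<beta> x = 1}"
    using Bp[OF a] by auto
  moreover have "finite {\<beta> \<in> I - B \<alpha>. X \<beta> x = 1}" "finite {\<beta> \<in> B \<alpha>. X \<beta> x = 1}"
    using finI Bp[OF a] by (auto intro: finite_subset[OF _ finI])
  ultimately show ?thesis unfolding cnt_def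
    by (metis (no_types, lifting) card_Un_disjoint disjoint_iff mem_Collect_eq DiffD2)
qed

lemma cnt_remove:
  assumes a: "\<alpha> \<in> I" and x: "x \<in> space M" and X1: "X \<alpha> x = 1"
  shows "cnt (B \<alpha>) x = cnt (B \<alpha> - {\<alpha>}) x + 1"
proof -
  have "{\<beta> \<in> B \<alpha>. X \<beta> x = 1} = insert \<alpha> {\<beta> \<in> B \<alpha> - {\<alpha>}. X \<beta> x = 1}"
    using Bp[OF a] X1 by auto
  moreover have "finite {\<beta> \<in> B \<alpha> - {\<alpha>}. X \<beta> x = 1}" using Bp[OF a] by (auto intro: finite_subset[OF _ finI])
  ultimately show ?thesis unfolding cnt_def by simp
qed

lemma int_prod_X: "\<alpha> \<in> I \<Longrightarrow> \<beta> \<in> I \<Longrightarrow> integrable M (\<lambda>x. X \<alpha> x * X \<beta> x)"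
  using Xm X_abs by (intro int_bounded[where C = 1]) (auto simp: abs_mult intro: mult_le_one)

lemma alpha_bound:
  assumes l: "l > 0" and A: "A \<subseteq> {..card I}" and a: "\<alpha> \<in> I"
  shows "\<bar>integral\<^sup>L M (\<lambda>x. pX \<alpha> * gg l A (nat \<lfloor>SX I x\<rfloor> + 1) - X \<alpha> x * gg l A (nat \<lfloor>SX I x\<rfloor>))\<bar>
    \<le> (1 - exp (- l)) / l * (\<Sum>\<beta>\<in>B \<alpha>. pX \<alpha> * pX \<beta>)
     + (1 - exp (- l)) / l * (\<Sum>\<beta>\<in>B \<alpha> - {\<alpha>}. integral\<^sup>L M (\<lambda>x. X \<alpha> x * X \<beta> x))
     + min 1 (1.4 / sqrt l) * integral\<^sup>L M (\<lambda>x. \<bar>real_cond_exp M (GS \<alpha>) (\<lambda>y. X \<alpha> y - pX \<alpha>) x\<bar>)"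
proof -
  define g where "g = gg l A"
  define db where "db = (1 - exp (- l)) / l"
  define gb where "gb = min 1 (1.4 / sqrt l)"
  define nW where "nW x = nat \<lfloor>SX I x\<rfloor>" for x
  define nV where "nV x = nat \<lfloor>SX (I - B \<alpha>) x\<rfloor>" for x
  define nU where "nU x = nat \<lfloor>SX (B \<alpha>) x\<rfloor>" for x
  define ce where "ce = real_cond_exp M (GS \<alpha>) (\<lambda>y. X \<alpha> y - pX \<alpha>)"
  have fA: "finite A" using A finite_subset by blast
  have Ba: "B \<alpha> \<subseteq> I" "\<alpha> \<in> B \<alpha>" using Bp[OF a] by auto
  have db0: "0 \<le> db" unfolding db_def using l by simp
  have gb0: "0 \<le> gb" unfolding gb_def using l by simp
  have gbd: "\<And>k. \<bar>g k\<bar> \<le> gb" unfolding g_def gb_def using gg_bound_all[OF l fA] .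
  have nWs: "x \<in> space M \<Longrightarrow> nW x = nV x + nU x" for x
    unfolding nW_def nV_def nU_def using nat_SX cnt_split[OF a] Ba by auto
  have lip: "\<And>i j. 1 \<le> i \<Longrightarrow> i \<le> j \<Longrightarrow> \<bar>g j - g i\<bar> \<le> db * real (j - i)"
    unfolding g_def db_def using gg_lip[OF l A] by blast
  have pX0: "0 \<le> pX \<alpha>" unfolding pX_def by simp
  have mW: "(\<lambda>x. f (nW x)) \<in> borel_measurable M" for f :: "nat \<Rightarrow> real"
    unfolding nW_def by (intro meas_nat_fun SX_meas) simp
  have mV: "(\<lambda>x. f (nV x)) \<in> borel_measurable M" for f :: "nat \<Rightarrow> real"
    unfolding nV_def by (intro meas_nat_fun SX_meas) auto
  have mVG: "(\<lambda>x. f (nV x)) \<in> borel_measurable (GS \<alpha>)" for f :: "nat \<Rightarrow> real"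
    unfolding nV_def by (intro meas_nat_fun SX_GS_meas a)
  have mU: "(\<lambda>x. f (nU x)) \<in> borel_measurable M" for f :: "nat \<Rightarrow> real"
    unfolding nU_def by (intro meas_nat_fun SX_meas) (use Ba in auto)
  have mXa: "X \<alpha> \<in> borel_measurable M" using Xm a .
  define D1 where "D1 x = g (nW x + 1) - g (nV x + 1)" for x
  define H where "H x = g (nV x + 1)" for x
  define D3 where "D3 x = X \<alpha> x * (H x - g (nW x))" for x
  have T: "pX \<alpha> * g (nW x + 1) - X \<alpha> x * g (nW x) = pX \<alpha> * D1 x + (- (H x * (X \<alpha> x - pX \<alpha>))) + D3 x" for x
    unfolding D1_def H_def D3_def by (simp add: algebra_simps)
  have iD1: "integrable M D1"
  proof (rule int_bounded[where C = "2 * gb"])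
    show "D1 \<in> borel_measurable M" unfolding D1_def using mV mW by measurable
    fix x assume x: "x \<in> space M"
    show "\<bar>D1 x\<bar> \<le> 2 * gb" unfolding D1_def
      using gbd[of "nW x + 1"] gbd[of "nV x + 1"] abs_triangle_ineq4[of "g (nW x + 1)" "g (nV x + 1)"] by linarith
  qed
  have iH: "integrable M H" unfolding H_def by (intro int_bounded[where C = gb] mV) (use gbd in auto)
  have iHX: "integrable M (\<lambda>x. H x * (X \<alpha> x - pX \<alpha>))"
  proof (rule int_bounded[where C = "gb * (1 + pX \<alpha>)"])
    show "(\<lambda>x. H x * (X \<alpha> x - pX \<alpha>)) \<in> borel_measurable M" unfolding H_def using mV mXa by measurable
    fix x assume x: "x \<in> space M"
    have "\<bar>X \<alpha> x - pX \<alpha>\<bar> \<le> 1 + pX \<alpha>" using X_abs[OF a x] pX0 by linarith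
    then show "\<bar>H x * (X \<alpha> x - pX \<alpha>)\<bar> \<le> gb * (1 + pX \<alpha>)"
      unfolding abs_mult H_def using gbd gb0 by (intro mult_mono) auto
  qed
  have iD3: "integrable M D3"
  proof (rule int_bounded[where C = "2 * gb"])
    show "D3 \<in> borel_measurable M" unfolding D3_def H_def using mV mW mXa by measurable
    fix x assume x: "x \<in> space M"
    have hb: "\<bar>H x - g (nW x)\<bar> \<le> 2 * gb" unfolding H_def
      using gbd[of "nW x"] gbd[of "nV x + 1"] abs_triangle_ineq4[of "g (nV x + 1)" "g (nW x)"] by linarith
    then show "\<bar>D3 x\<bar> \<le> 2 * gb" unfolding D3_def abs_mult
      using mult_mono[OF X_abs[OF a x] hb] gb0 by simp
  qed
  have int_eq: "integral\<^sup>L M (\<lambda>x. pX \<alpha> * g (nW x + 1) - X \<alpha> x * g (nW x))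
      = pX \<alpha> * integral\<^sup>L M D1 - integral\<^sup>L M (\<lambda>x. H x * (X \<alpha> x - pX \<alpha>)) + integral\<^sup>L M D3"
    unfolding T using iD1 iHX iD3 by simp
  have b1: "\<bar>integral\<^sup>L M D1\<bar> \<le> db * (\<Sum>\<beta>\<in>B \<alpha>. pX \<beta>)"
  proof -
    have iU: "integrable M (\<lambda>x. db * SX (B \<alpha>) x)"
      unfolding SX_def using X_int Ba by (intro integrable_mult_right Bochner_Integration.integrable_sum) auto
    have "\<bar>integral\<^sup>L M D1\<bar> \<le> integral\<^sup>L M (\<lambda>x. db * SX (B \<alpha>) x)"
    proof (rule abs_int_bound[OF iD1 iU])
      fix x assume x: "x \<in> space M"
      have "\<bar>D1 x\<bar> \<le> db * real ((nW x + 1) - (nV x + 1))"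
        unfolding D1_def using nWs[OF x] by (intro lip) auto
      also have "real ((nW x + 1) - (nV x + 1)) = SX (B \<alpha>) x"
        using nWs[OF x] SX_cnt[OF Ba(1) x] nat_SX[OF Ba(1) x] unfolding nU_def by simp
      finally show "\<bar>D1 x\<bar> \<le> db * SX (B \<alpha>) x" .
    qed
    also have "\<dots> = db * (\<Sum>\<beta>\<in>B \<alpha>. pX \<beta>)"
    proof -
      have "integral\<^sup>L M (SX (B \<alpha>)) = (\<Sum>\<beta>\<in>B \<alpha>. pX \<beta>)"
      proof -
        have "integral\<^sup>L M (SX (B \<alpha>)) = (\<Sum>\<beta>\<in>B \<alpha>. integral\<^sup>L M (X \<beta>))"
          unfolding SX_def by (rule Bochner_Integration.integral_sum) (use X_int Ba in auto)
        also have "\<dots> = (\<Sum>\<beta>\<in>B \<alpha>. pX \<beta>)" using X_expect Ba by (intro sum.cong) auto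
        finally show ?thesis .
      qed
      then show ?thesis by (simp add: integral_mult_right_zero)
    qed
    finally show ?thesis .
  qed
  have b3: "\<bar>integral\<^sup>L M D3\<bar> \<le> db * (\<Sum>\<beta>\<in>B \<alpha> - {\<alpha>}. integral\<^sup>L M (\<lambda>x. X \<alpha> x * X \<beta> x))"
  proof -
    have iR: "integrable M (\<lambda>x. db * (\<Sum>\<beta>\<in>B \<alpha> - {\<alpha>}. X \<alpha> x * X \<beta> x))"
      using int_prod_X a Ba by (intro integrable_mult_right Bochner_Integration.integrable_sum) auto
    have "\<bar>integral\<^sup>L M D3\<bar> \<le> integral\<^sup>L M (\<lambda>x. db * (\<Sum>\<beta>\<in>B \<alpha> - {\<alpha>}. X \<alpha> x * X \<beta> x))"
    proof (rule abs_int_bound[OF iD3 iR])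
      fix x assume x: "x \<in> space M"
      have nn: "0 \<le> (\<Sum>\<beta>\<in>B \<alpha> - {\<alpha>}. X \<alpha> x * X \<beta> x)"
        using X01 a Ba x by (intro sum_nonneg) (auto dest!: X01[of _ x])
      show "\<bar>D3 x\<bar> \<le> db * (\<Sum>\<beta>\<in>B \<alpha> - {\<alpha>}. X \<alpha> x * X \<beta> x)"
      proof (cases "X \<alpha> x = 1")
        case False
        then have "X \<alpha> x = 0" using X01[OF a x] by auto
        then show ?thesis unfolding D3_def using nn db0 by simp
      next
        case True
        have cr: "cnt (B \<alpha>) x = cnt (B \<alpha> - {\<alpha>}) x + 1" by (rule cnt_remove[OF a x True])
        have nUe: "nU x = cnt (B \<alpha>) x" unfolding nU_def using nat_SX[OF Ba(1) x] .
        have "\<bar>D3 x\<bar> = \<bar>g (nW x) - g (nV x + 1)\<bar>" unfolding D3_def H_def True by simp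
        also have "\<dots> \<le> db * real (nW x - (nV x + 1))"
          using nWs[OF x] cr nUe by (intro lip) auto
        also have "real (nW x - (nV x + 1)) = real (cnt (B \<alpha> - {\<alpha>}) x)"
          using nWs[OF x] cr nUe by simp
        also have "\<dots> = (\<Sum>\<beta>\<in>B \<alpha> - {\<alpha>}. X \<alpha> x * X \<beta> x)"
        proof -
          have "B \<alpha> - {\<alpha>} \<subseteq> I" using Ba by auto
          from SX_cnt[OF this x] show ?thesis unfolding SX_def True by simp
        qed
        finally show ?thesis .
      qed
    qed
    also have "\<dots> = db * (\<Sum>\<beta>\<in>B \<alpha> - {\<alpha>}. integral\<^sup>L M (\<lambda>x. X \<alpha> x * X \<beta> x))"
    proof -
      have "integral\<^sup>L M (\<lambda>x. \<Sum>\<beta>\<in>B \<alpha> - {\<alpha>}. X \<alpha> x * X \<beta> x) = (\<Sum>\<beta>\<in>B \<alpha> - {\<alpha>}. integral\<^sup>L M (\<lambda>x. X \<alpha> x * X \<beta> x))"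
        by (rule Bochner_Integration.integral_sum) (use int_prod_X a Ba in auto)
      then show ?thesis by (simp add: integral_mult_right_zero)
    qed
    finally show ?thesis .
  qed
  have b2: "\<bar>integral\<^sup>L M (\<lambda>x. H x * (X \<alpha> x - pX \<alpha>))\<bar> \<le> gb * integral\<^sup>L M (\<lambda>x. \<bar>ce x\<bar>)"
  proof -
    interpret sfs: sigma_finite_subalgebra M "GS \<alpha>" by (rule GS_sfs)
    have HG: "H \<in> borel_measurable (GS \<alpha>)" unfolding H_def by (rule mVG)
    have gm: "(\<lambda>y. X \<alpha> y - pX \<alpha>) \<in> borel_measurable M" using mXa by measurable
    have e: "integral\<^sup>L M (\<lambda>x. H x * ce x) = integral\<^sup>L M (\<lambda>x. H x * (X \<alpha> x - pX \<alpha>))"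
      unfolding ce_def by (rule sfs.real_cond_exp_intg(2)[OF iHX HG gm])
    have iHce: "integrable M (\<lambda>x. H x * ce x)"
      unfolding ce_def by (rule sfs.real_cond_exp_intg(1)[OF iHX HG gm])
    have ice: "integrable M ce"
      unfolding ce_def by (rule sfs.real_cond_exp_int(1)) (use X_int[OF a] in simp)
    have "\<bar>integral\<^sup>L M (\<lambda>x. H x * ce x)\<bar> \<le> integral\<^sup>L M (\<lambda>x. gb * \<bar>ce x\<bar>)"
    proof (rule abs_int_bound[OF iHce])
      show "integrable M (\<lambda>x. gb * \<bar>ce x\<bar>)" using ice by (intro integrable_mult_right integrable_abs)
      fix x assume "x \<in> space M"
      show "\<bar>H x * ce x\<bar> \<le> gb * \<bar>ce x\<bar>" unfolding abs_mult H_def using gbd by (intro mult_right_mono) auto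
    qed
    then show ?thesis unfolding e by simp
  qed
  have "\<bar>integral\<^sup>L M (\<lambda>x. pX \<alpha> * g (nW x + 1) - X \<alpha> x * g (nW x))\<bar>
      \<le> pX \<alpha> * \<bar>integral\<^sup>L M D1\<bar> + \<bar>integral\<^sup>L M (\<lambda>x. H x * (X \<alpha> x - pX \<alpha>))\<bar> + \<bar>integral\<^sup>L M D3\<bar>"
    unfolding int_eq using pX0 by (simp add: abs_mult abs_triangle_ineq4[THEN order_trans] abs_triangle_ineq[THEN order_trans]; smt (verit) abs_mult abs_of_nonneg)
  also have "\<dots> \<le> pX \<alpha> * (db * (\<Sum>\<beta>\<in>B \<alpha>. pX \<beta>)) + gb * integral\<^sup>L M (\<lambda>x. \<bar>ce x\<bar>)
      + db * (\<Sum>\<beta>\<in>B \<alpha> - {\<alpha>}. integral\<^sup>L M (\<lambda>x. X \<alpha> x * X \<beta> x))"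
    using b1 b2 b3 pX0 by (intro add_mono mult_left_mono) auto
  also have "pX \<alpha> * (db * (\<Sum>\<beta>\<in>B \<alpha>. pX \<beta>)) = db * (\<Sum>\<beta>\<in>B \<alpha>. pX \<alpha> * pX \<beta>)"
    by (simp add: sum_distrib_left algebra_simps)
  finally show ?thesis unfolding g_def nW_def db_def gb_def ce_def by simp
qed

end


context CSset
begin

lemma stein_total:
  assumes ldef: "l = (\<Sum>\<alpha>\<in>I. pX \<alpha>)" and l: "l > 0" and A: "A \<subseteq> {..card I}"
  shows "\<bar>(\<Sum>k\<in>A. measure M {x \<in> space M. SX I x = real k}) - sum (pp l) A\<bar>
    \<le> (1 - exp (- l)) / l * ((\<Sum>\<alpha>\<in>I. \<Sum>\<beta>\<in>B \<alpha>. pX \<alpha> * pX \<beta>)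
        + (\<Sum>\<alpha>\<in>I. \<Sum>\<beta>\<in>B \<alpha> - {\<alpha>}. integral\<^sup>L M (\<lambda>x. X \<alpha> x * X \<beta> x)))
     + min 1 (1.4 / sqrt l) * (\<Sum>\<alpha>\<in>I. integral\<^sup>L M (\<lambda>x. \<bar>real_cond_exp M (GS \<alpha>) (\<lambda>y. X \<alpha> y - pX \<alpha>) x\<bar>))"
proof -
  define g where "g = gg l A"
  define nW where "nW x = nat \<lfloor>SX I x\<rfloor>" for x
  define T where "T \<alpha> x = pX \<alpha> * g (nW x + 1) - X \<alpha> x * g (nW x)" for \<alpha> x
  define gb where "gb = min 1 (1.4 / sqrt l)"
  have fA: "finite A" using A finite_subset by blast
  have gbd: "\<And>k. \<bar>g k\<bar> \<le> gb" unfolding g_def gb_def using gg_bound_all[OF l fA] .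
  have gb0: "0 \<le> gb" unfolding gb_def using l by simp
  have mW: "(\<lambda>x. f (nW x)) \<in> borel_measurable M" for f :: "nat \<Rightarrow> real"
    unfolding nW_def by (intro meas_nat_fun SX_meas) simp
  have SXW: "x \<in> space M \<Longrightarrow> SX I x = real (nW x)" for x
    unfolding nW_def using SX_cnt nat_SX by simp
  have iT: "integrable M (T \<alpha>)" if a: "\<alpha> \<in> I" for \<alpha>
  proof (rule int_bounded[where C = "pX \<alpha> * gb + gb"])
    show "T \<alpha> \<in> borel_measurable M" unfolding T_def using mW Xm[OF a] by measurable
    fix x assume x: "x \<in> space M"
    have p0: "0 \<le> pX \<alpha>" unfolding pX_def by simp
    have "\<bar>pX \<alpha> * g (nW x + 1)\<bar> \<le> pX \<alpha> * gb" using gbd p0 by (simp add: abs_mult mult_left_mono)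
    moreover have "\<bar>X \<alpha> x * g (nW x)\<bar> \<le> 1 * gb" unfolding abs_mult
      using mult_mono[OF X_abs[OF a x] gbd[of "nW x"]] gb0 by simp
    ultimately show "\<bar>T \<alpha> x\<bar> \<le> pX \<alpha> * gb + gb" unfolding T_def by linarith
  qed
  have F1: "l * g (nW x + 1) - real (nW x) * g (nW x) = (\<Sum>\<alpha>\<in>I. T \<alpha> x)" if x: "x \<in> space M" for x
  proof -
    have "real (nW x) = (\<Sum>\<alpha>\<in>I. X \<alpha> x)" using SXW[OF x] unfolding SX_def by simp
    then show ?thesis unfolding T_def ldef by (simp add: sum_distrib_right sum_subtractf)
  qed
  have F2: "l * g (nW x + 1) - real (nW x) * g (nW x) = (\<Sum>k\<in>A. indicator {x \<in> space M. SX I x = real k} x) - sum (pp l) A"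
    if x: "x \<in> space M" for x
  proof -
    have "(\<Sum>k\<in>A. indicator {x \<in> space M. SX I x = real k} x) = (\<Sum>k\<in>A. if nW x = k then 1 else (0::real))"
      using SXW[OF x] x by (intro sum.cong) (auto simp: indicator_def)
    also have "\<dots> = indicator A (nW x)" using fA by (simp add: sum.delta indicator_def)
    finally show ?thesis unfolding g_def using stein_eq[OF l, of A "nW x"] by simp
  qed
  have "(\<Sum>k\<in>A. measure M {x \<in> space M. SX I x = real k}) - sum (pp l) A
      = integral\<^sup>L M (\<lambda>x. (\<Sum>k\<in>A. indicator {x \<in> space M. SX I x = real k} x) - sum (pp l) A)"
  proof -
    have mk: "{x \<in> space M. SX I x = real k} \<in> sets M" for k
      using SX_meas[of I] by measurable
    have ii: "integrable M (indicator {x \<in> space M. SX I x = real k} :: 'a \<Rightarrow> real)" for k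
      by (rule int_bounded[where C = 1]) (use mk in \<open>auto simp: indicator_def\<close>)
    have "integral\<^sup>L M (\<lambda>x. (\<Sum>k\<in>A. indicator {x \<in> space M. SX I x = real k} x) - sum (pp l) A)
        = integral\<^sup>L M (\<lambda>x. (\<Sum>k\<in>A. indicator {x \<in> space M. SX I x = real k} x :: real)) - sum (pp l) A"
      using ii by (subst Bochner_Integration.integral_diff) (auto simp: prob_space)
    also have "integral\<^sup>L M (\<lambda>x. (\<Sum>k\<in>A. indicator {x \<in> space M. SX I x = real k} x :: real))
        = (\<Sum>k\<in>A. measure M {x \<in> space M. SX I x = real k})"
      using ii by (subst Bochner_Integration.integral_sum) (auto simp: Int_absorb2 Collect_conj_eq Int_commute)
    finally show ?thesis by simp
  qed
  also have "\<dots> = integral\<^sup>L M (\<lambda>x. \<Sum>\<alpha>\<in>I. T \<alpha> x)"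
    using F1 F2 by (intro Bochner_Integration.integral_cong) auto
  also have "\<dots> = (\<Sum>\<alpha>\<in>I. integral\<^sup>L M (T \<alpha>))"
    by (rule Bochner_Integration.integral_sum) (use iT in auto)
  finally have eq: "(\<Sum>k\<in>A. measure M {x \<in> space M. SX I x = real k}) - sum (pp l) A = (\<Sum>\<alpha>\<in>I. integral\<^sup>L M (T \<alpha>))" .
  have "\<bar>\<Sum>\<alpha>\<in>I. integral\<^sup>L M (T \<alpha>)\<bar> \<le> (\<Sum>\<alpha>\<in>I. \<bar>integral\<^sup>L M (T \<alpha>)\<bar>)" by (rule sum_abs)
  also have "\<dots> \<le> (\<Sum>\<alpha>\<in>I. (1 - exp (- l)) / l * (\<Sum>\<beta>\<in>B \<alpha>. pX \<alpha> * pX \<beta>)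
     + (1 - exp (- l)) / l * (\<Sum>\<beta>\<in>B \<alpha> - {\<alpha>}. integral\<^sup>L M (\<lambda>x. X \<alpha> x * X \<beta> x))
     + min 1 (1.4 / sqrt l) * integral\<^sup>L M (\<lambda>x. \<bar>real_cond_exp M (GS \<alpha>) (\<lambda>y. X \<alpha> y - pX \<alpha>) x\<bar>))"
    unfolding T_def g_def nW_def by (intro sum_mono alpha_bound[OF l A]) 
  also have "\<dots> = (1 - exp (- l)) / l * ((\<Sum>\<alpha>\<in>I. \<Sum>\<beta>\<in>B \<alpha>. pX \<alpha> * pX \<beta>)
        + (\<Sum>\<alpha>\<in>I. \<Sum>\<beta>\<in>B \<alpha> - {\<alpha>}. integral\<^sup>L M (\<lambda>x. X \<alpha> x * X \<beta> x)))
     + min 1 (1.4 / sqrt l) * (\<Sum>\<alpha>\<in>I. integral\<^sup>L M (\<lambda>x. \<bar>real_cond_exp M (GS \<alpha>) (\<lambda>y. X \<alpha> y - pX \<alpha>) x\<bar>))"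
    by (simp add: sum.distrib sum_distrib_left distrib_left)
  finally show ?thesis unfolding eq .
qed

end




definition phi :: "real \<Rightarrow> real" where "phi t = - (t * ln t)"

lemma phi_nonneg: "0 \<le> t \<Longrightarrow> t \<le> 1 \<Longrightarrow> 0 \<le> phi t"
  unfolding phi_def by (cases "t = 0") (auto simp: mult_nonneg_nonpos)

lemma phi_sub:
  assumes "0 \<le> x" "0 \<le> r"
  shows "phi (x + r) \<le> phi x + phi r"
proof (cases "x = 0 \<or> r = 0")
  case True
  then show ?thesis by (auto simp: phi_def)
next
  case False
  then have xr: "0 < x" "0 < r" using assms by auto
  have "x * ln x \<le> x * ln (x + r)" using xr by (intro mult_left_mono) auto
  moreover have "r * ln r \<le> r * ln (x + r)" using xr by (intro mult_left_mono) auto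
  ultimately show ?thesis unfolding phi_def by (simp add: algebra_simps)
qed

lemma phi_1minus_small:
  assumes "0 \<le> r" "r \<le> 1/2"
  shows "phi (1 - r) \<le> r"
proof (cases "r = 0")
  case True then show ?thesis by (simp add: phi_def)
next
  case False
  then have r: "0 < r" using assms by simp
  have "ln (1 / (1 - r)) \<le> 1 / (1 - r) - 1" using assms by (intro ln_le_minus_one) auto
  then have "- ln (1 - r) \<le> r / (1 - r)" using assms by (simp add: ln_div field_simps)
  then have "(1 - r) * (- ln (1 - r)) \<le> (1 - r) * (r / (1 - r))" using assms by (intro mult_left_mono) auto
  then show ?thesis unfolding phi_def using assms by simp
qed

lemma phi_sym:
  assumes "0 \<le> r" "r \<le> 1/2"
  shows "phi (1 - r) \<le> phi r"
proof (cases "r \<le> exp (- 1)")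
  case True
  show ?thesis
  proof (cases "r = 0")
    case True then show ?thesis by (simp add: phi_def)
  next
    case False
    then have r: "0 < r" using assms by simp
    have "ln r \<le> ln (exp (-1))" using True r by (subst ln_le_cancel_iff) auto
    then have "ln r \<le> -1" by simp
    then have "r * 1 \<le> r * (- ln r)" using r by (intro mult_left_mono) auto
    then have "r \<le> phi r" unfolding phi_def by simp
    then show ?thesis using phi_1minus_small[OF assms] by simp
  qed
next
  case False
  then have r: "exp (- 1) < r" by simp
  have e2: "exp (- 1) \<ge> (0::real)" by simp
  let ?u = "\<lambda>t. phi t - phi (1 - t)"
  have "?u (1/2) \<le> ?u r"
  proof (rule DERIV_nonpos_imp_nonincreasing[OF assms(2)])
    fix t :: real assume t: "r \<le> t" "t \<le> 1/2"
    have t0: "0 < t" "t < 1" using t r exp_gt_zero[of "-1::real"] by linarith+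
    have "(?u has_real_derivative (- (ln t + 1) - (ln (1 - t) + 1))) (at t)"
      unfolding phi_def using t0 by (auto intro!: derivative_eq_intros)
    moreover have "- (ln t + 1) - (ln (1 - t) + 1) \<le> 0"
    proof -
      have ee: "exp 1 \<ge> (2::real)" using exp_ge_add_one_self[of 1] by simp
      have "exp (- 2) \<le> t * (1 - t)"
      proof -
        have "exp (- 2) = exp (- 1) * exp (- 1::real)" by (simp add: exp_add[symmetric])
        also have "\<dots> \<le> exp (- 1) * (1/2)"
        proof (rule mult_left_mono)
          show "exp (- 1) \<le> (1/2::real)" using ee by (simp add: exp_minus field_simps)
        qed simp
        also have "\<dots> \<le> t * (1 - t)" using t r t0 by (intro mult_mono) auto
        finally show ?thesis .
      qed
      then have "- 2 \<le> ln (t * (1 - t))" using t0 by (subst ln_ge_iff) auto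
      then show ?thesis using t0 by (simp add: ln_mult_pos)
    qed
    ultimately show "\<exists>y. (?u has_real_derivative y) (at t) \<and> y \<le> 0" by blast
  qed
  then show ?thesis by simp
qed

lemma phi_rev:
  assumes x: "0 \<le> x" and r: "0 \<le> r" "r \<le> 1/2" and xr: "x + r \<le> 1"
  shows "phi x - phi (x + r) \<le> phi r"
proof (cases "x = 0")
  case True
  have "phi 0 = 0" by (simp add: phi_def)
  then show ?thesis using phi_nonneg[of r] r True by simp
next
  case False
  then have x0: "0 < x" using x by simp
  let ?f = "\<lambda>t. phi t - phi (t + r)"
  have "?f x \<le> ?f (1 - r)"
  proof (rule DERIV_nonneg_imp_nondecreasing[of x "1 - r" ?f])
    show "x \<le> 1 - r" using xr by simp
    fix t assume t: "x \<le> t" "t \<le> 1 - r"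
    have t0: "0 < t" "0 < t + r" using t x0 r by auto
    have "(?f has_real_derivative (- (ln t + 1) + (ln (t + r) + 1))) (at t)"
      unfolding phi_def using t0 by (auto intro!: derivative_eq_intros)
    moreover have "0 \<le> - (ln t + 1) + (ln (t + r) + 1)" using t0 r by simp
    ultimately show "\<exists>y. (?f has_real_derivative y) (at t) \<and> 0 \<le> y" by blast
  qed
  also have "?f (1 - r) = phi (1 - r)" by (simp add: phi_def)
  also have "\<dots> \<le> phi r" using phi_sym r by simp
  finally show ?thesis .
qed

lemma phi_cont:
  assumes "0 \<le> x" "x \<le> 1" "0 \<le> y" "y \<le> 1" "\<bar>x - y\<bar> \<le> 1/2"
  shows "\<bar>phi x - phi y\<bar> \<le> phi \<bar>x - y\<bar>"
proof -
  have main: "\<bar>phi u - phi (u + r)\<bar> \<le> phi r" if "0 \<le> u" "0 \<le> r" "r \<le> 1/2" "u + r \<le> 1" for u r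
    using phi_sub[of u r] phi_rev[of u r] that by (simp add: abs_le_iff)
  show ?thesis
  proof (cases "x \<le> y")
    case True
    then show ?thesis using main[of x "y - x"] assms by (simp add: abs_minus_commute)
  next
    case False
    then show ?thesis using main[of y "x - y"] assms by (simp add: abs_minus_commute)
  qed
qed

lemma gibbs:
  fixes r :: "'b \<Rightarrow> real"
  assumes fS: "finite S" and N: "real (card S) \<le> N" and r0: "\<And>i. i \<in> S \<Longrightarrow> 0 \<le> r i"
    and th: "(\<Sum>i\<in>S. r i) = t" "t > 0"
  shows "(\<Sum>i\<in>S. phi (r i)) \<le> t * ln (N / t)"
proof -
  have Npos: "N > 0"
  proof -
    have "S \<noteq> {}" using th by auto
    then have "card S > 0" using fS by (simp add: card_gt_0_iff)
    then show ?thesis using N by linarith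
  qed
  have each: "phi (r i) - r i * ln (N / t) \<le> t / N - r i" if i: "i \<in> S" for i
  proof (cases "r i = 0")
    case True
    then show ?thesis using Npos th by (simp add: phi_def)
  next
    case False
    then have ri: "r i > 0" using r0[OF i] by simp
    have "phi (r i) - r i * ln (N / t) = r i * ln (t / (N * r i))"
      unfolding phi_def using ri Npos th by (simp add: ln_div ln_mult_pos algebra_simps)
    also have "\<dots> \<le> r i * (t / (N * r i) - 1)"
      using ri Npos th by (intro mult_left_mono ln_le_minus_one) auto
    also have "\<dots> = t / N - r i" using ri Npos by (simp add: field_simps)
    finally show ?thesis .
  qed
  have "(\<Sum>i\<in>S. phi (r i) - r i * ln (N / t)) \<le> (\<Sum>i\<in>S. t / N - r i)"
    using each by (rule sum_mono)
  also have "\<dots> = real (card S) * t / N - t" using th by (simp add: sum_subtractf)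
  also have "\<dots> \<le> 0"
  proof -
    have "real (card S) * t / N \<le> N * t / N" using N th Npos by (intro divide_right_mono mult_right_mono) auto
    then show ?thesis using Npos by simp
  qed
  finally show ?thesis using th by (simp add: sum_subtractf sum_distrib_right[symmetric])
qed

lemma tlnt_mono:
  fixes s t N :: real
  assumes "0 < s" "s \<le> t" "exp 1 * t \<le> N"
  shows "s * ln (N / s) \<le> t * ln (N / t)"
proof -
  have t0: "0 < t" using assms by linarith
  have N0: "0 < N" using assms(3) t0 by (smt (verit) exp_gt_zero mult_pos_pos)
  have L1: "1 \<le> ln (N / t)"
  proof -
    have "exp 1 \<le> N / t" using assms t0 by (simp add: field_simps)
    then show ?thesis using t0 N0 by (subst ln_ge_iff) auto
  qed
  have L2: "1 - t / s \<le> ln (s / t)"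
  proof -
    have "ln (t / s) \<le> t / s - 1" using assms t0 by (intro ln_le_minus_one) auto
    then show ?thesis using assms t0 by (simp add: ln_div)
  qed
  have "t * ln (N / t) - s * ln (N / s) = (t - s) * ln (N / t) + s * ln (s / t)"
    using assms t0 N0 by (simp add: ln_div algebra_simps)
  also have "\<dots> \<ge> (t - s) * 1 + s * (1 - t / s)"
    using L1 L2 assms by (intro add_mono mult_left_mono) auto
  also have "(t - s) * 1 + s * (1 - t / s) = 0" using assms by (simp add: field_simps)
  finally show ?thesis by simp
qed

lemma cover_thomas:
  fixes p q :: "nat \<Rightarrow> real"
  assumes pq: "\<And>k. k \<le> n \<Longrightarrow> 0 \<le> p k \<and> p k \<le> 1 \<and> 0 \<le> q k \<and> q k \<le> 1"
    and th: "(\<Sum>k\<le>n. \<bar>p k - q k\<bar>) \<le> a" and a: "0 < a" "a \<le> 1/2" and n1: "1 \<le> n"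
  shows "\<bar>(\<Sum>k\<le>n. phi (q k)) - (\<Sum>k\<le>n. phi (p k))\<bar> \<le> a * ln ((real n + 1) / a)"
proof -
  define t where "t = (\<Sum>k\<le>n. \<bar>p k - q k\<bar>)"
  have single: "\<bar>p k - q k\<bar> \<le> t" if "k \<le> n" for k
    unfolding t_def using that by (intro member_le_sum) auto
  have "\<bar>(\<Sum>k\<le>n. phi (q k)) - (\<Sum>k\<le>n. phi (p k))\<bar> \<le> (\<Sum>k\<le>n. \<bar>phi (q k) - phi (p k)\<bar>)"
    by (simp add: sum_subtractf[symmetric] sum_abs)
  also have "\<dots> \<le> (\<Sum>k\<le>n. phi \<bar>p k - q k\<bar>)"
  proof (rule sum_mono)
    fix k assume k: "k \<in> {..n}"
    have "\<bar>q k - p k\<bar> \<le> 1/2" using single[of k] k th a unfolding t_def by (simp add: abs_minus_commute)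
    then have "\<bar>phi (q k) - phi (p k)\<bar> \<le> phi \<bar>q k - p k\<bar>" using pq[of k] k by (intro phi_cont) auto
    then show "\<bar>phi (q k) - phi (p k)\<bar> \<le> phi \<bar>p k - q k\<bar>" by (simp add: abs_minus_commute)
  qed
  also have "\<dots> \<le> a * ln ((real n + 1) / a)"
  proof (cases "t = 0")
    case True
    then have "\<And>k. k \<le> n \<Longrightarrow> \<bar>p k - q k\<bar> = 0" using single by (smt (verit) abs_ge_zero)
    then have "(\<Sum>k\<le>n. phi \<bar>p k - q k\<bar>) = 0" by (simp add: phi_def)
    moreover have "0 \<le> a * ln ((real n + 1) / a)" using a by (intro mult_nonneg_nonneg) auto
    ultimately show ?thesis by simp
  next
    case False
    then have t0: "t > 0" unfolding t_def by (simp add: sum_nonneg order_le_neq_trans)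
    have "(\<Sum>k\<le>n. phi \<bar>p k - q k\<bar>) \<le> t * ln ((real n + 1) / t)"
      by (rule gibbs) (use t0 in \<open>auto simp: t_def\<close>)
    also have "\<dots> \<le> a * ln ((real n + 1) / a)"
    proof (rule tlnt_mono[OF t0])
      show "t \<le> a" using th unfolding t_def .
      have "exp 1 * a \<le> 3 * (1/2)" using e_less_272 a by (intro mult_mono) auto
      then show "exp 1 * a \<le> real n + 1" using n1 by simp
    qed
    finally show ?thesis .
  qed
  finally show ?thesis .
qed




lemma neg_ln_pp:
  assumes l: "l > 0"
  shows "- ln (pp l k) \<le> l + real k * real k / l - real k"
proof (cases "k = 0")
  case True
  then show ?thesis unfolding poisson_pmf_fun_def by simp
next
  case False
  then have k: "real k > 0" by simp
  have lp: "ln (pp l k) = - l + real k * ln l - ln (fact k)"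
    unfolding poisson_pmf_fun_def using l by (simp add: ln_mult ln_div ln_realpow)
  have "ln (fact k) \<le> ln (real k ^ k)"
    using fact_le_power[of k, where 'a = real] k by (subst ln_le_cancel_iff) auto
  then have lf: "ln (fact k) \<le> real k * ln (real k)" by (simp add: ln_realpow)
  have "ln (real k / l) \<le> real k / l - 1" using k l by (intro ln_le_minus_one) auto
  then have "real k * (ln (real k) - ln l) \<le> real k * (real k / l - 1)"
    using k l by (intro mult_left_mono) (auto simp: ln_div)
  then show ?thesis using lp lf by (simp add: algebra_simps)
qed

lemma phi_pp_le:
  assumes l: "l > 0"
  shows "phi (pp l k) \<le> pp l k * (l + real k * real k / l - real k)"
proof -
  have "pp l k * (- ln (pp l k)) \<le> pp l k * (l + real k * real k / l - real k)"
    using neg_ln_pp[OF l, of k] pp_pos[OF l, of k] by (intro mult_left_mono) auto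
  then show ?thesis unfolding phi_def by simp
qed

lemma aux_cancel: "(l::real) > 0 \<Longrightarrow> r > 0 \<Longrightarrow> l / r * p * (r * r / l) = p * r"
  by (simp add: field_simps)

lemma pp_shift2:
  assumes l: "l > 0"
  shows "pp l (Suc (Suc k)) * (l + real (Suc (Suc k)) * real (Suc (Suc k)) / l - real (Suc (Suc k)))
    = l * pp l (Suc (Suc k)) + l * pp l k + (1 - l) * pp l (Suc k)"
proof -
  have e1: "pp l (Suc (Suc k)) = l / real (Suc (Suc k)) * pp l (Suc k)" by (rule pp_Suc)
  have e2: "pp l (Suc k) = l / real (Suc k) * pp l k" by (rule pp_Suc)
  have "pp l (Suc (Suc k)) * (real (Suc (Suc k)) * real (Suc (Suc k)) / l) = pp l (Suc k) * real (Suc (Suc k))"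
    unfolding e1 using aux_cancel[OF l, of "real (Suc (Suc k))" "pp l (Suc k)"] by simp
  also have "\<dots> = pp l (Suc k) * real (Suc k) + pp l (Suc k)" by (simp add: algebra_simps)
  also have "pp l (Suc k) * real (Suc k) = l * pp l k" unfolding e2 by simp
  finally have a: "pp l (Suc (Suc k)) * (real (Suc (Suc k)) * real (Suc (Suc k)) / l) = l * pp l k + pp l (Suc k)" .
  have b: "pp l (Suc (Suc k)) * real (Suc (Suc k)) = l * pp l (Suc k)" unfolding e1 by simp
  show ?thesis using a b by (simp add: algebra_simps)
qed

lemma chernoff:
  assumes l: "l > 0" and N: "l \<le> real N" "1 \<le> N"
  shows "(\<Sum>i. pp l (i + N)) \<le> exp (- (l + real N * ln (real N / (l * exp 1))))"
proof -
  define c where "c = real N / l"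
  have c1: "1 \<le> c" unfolding c_def using N l by simp
  have S: "(\<lambda>j. pp l j * c ^ j) sums (exp (- l) * exp (real N))"
  proof -
    have "(\<lambda>j. real N ^ j / fact j) sums exp (real N)"
      using exp_converges[of "real N"] by (simp add: divide_inverse scaleR_conv_of_real mult.commute)
    from sums_mult[OF this, of "exp (- l)"]
    show ?thesis unfolding poisson_pmf_fun_def c_def using l by (simp add: power_divide field_simps)
  qed
  have S2: "(\<lambda>i. pp l (i + N) * c ^ (i + N)) sums (exp (- l) * exp (real N) - (\<Sum>j<N. pp l j * c ^ j))"
    by (rule sums_split_initial_segment[OF S])
  have init0: "0 \<le> (\<Sum>j<N. pp l j * c ^ j)" using pp_pos[OF l] c1 by (intro sum_nonneg) (auto simp: less_imp_le)
  have S3: "(\<lambda>i. pp l (i + N) * c ^ i) sums ((exp (- l) * exp (real N) - (\<Sum>j<N. pp l j * c ^ j)) / c ^ N)"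
    using sums_divide[OF S2, of "c ^ N"] c1 by (simp add: power_add)
  have "(\<Sum>i. pp l (i + N)) \<le> (exp (- l) * exp (real N) - (\<Sum>j<N. pp l j * c ^ j)) / c ^ N"
  proof (rule sums_le[OF _ summable_sums S3])
    show "summable (\<lambda>i. pp l (i + N))" using pp_summable summable_iff_shift by blast
    fix i
    have "1 \<le> c ^ i" using c1 by simp
    then show "pp l (i + N) \<le> pp l (i + N) * c ^ i" using pp_pos[OF l, of "i + N"]
      by (simp add: mult_le_cancel_left1)
  qed
  also have "\<dots> \<le> exp (- l) * exp (real N) / c ^ N" using init0 c1 by (intro divide_right_mono) auto
  also have "\<dots> = exp (- (l + real N * ln (real N / (l * exp 1))))"
  proof -
    have lnc: "real N * ln (real N / (l * exp 1)) = real N * ln c - real N"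
      unfolding c_def using N l by (simp add: ln_div ln_mult_pos algebra_simps)
    have "exp (real N * ln c) = c ^ N" using c1 by (simp add: exp_of_nat_mult[symmetric] ln_realpow[symmetric]) 
    then show ?thesis unfolding lnc using c1 by (simp add: exp_add exp_diff exp_minus field_simps)
  qed
  finally show ?thesis .
qed

lemma tail_entropy:
  assumes l: "l > 0" and lm: "l \<le> real m - 1"
  shows "summable (\<lambda>i. phi (pp l (i + Suc m)))"
    "(\<Sum>i. phi (pp l (i + Suc m))) \<le> 2 * l * exp (- (l + (real m - 1) * ln ((real m - 1) / (l * exp 1))))"
proof -
  obtain n where mn: "m = Suc (Suc n)" using lm l by (cases m; cases "m - 1") auto
  define A1 where "A1 = 1 - PF l (Suc (Suc n))"
  define A0 where "A0 = 1 - PF l (Suc n)"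
  define Am where "Am = 1 - PF l n"
  have s1: "(\<lambda>i. pp l (i + Suc (Suc (Suc n)))) sums A1" unfolding A1_def by (rule tail_sums)
  have s0: "(\<lambda>i. pp l (i + Suc (Suc n))) sums A0" unfolding A0_def by (rule tail_sums)
  have sm: "(\<lambda>i. pp l (i + Suc n)) sums Am" unfolding Am_def by (rule tail_sums)
  define g where "g i = l * pp l (i + Suc (Suc (Suc n))) + l * pp l (i + Suc n) + (1 - l) * pp l (i + Suc (Suc n))" for i
  have sg: "g sums (l * A1 + l * Am + (1 - l) * A0)"
    unfolding g_def by (intro sums_add sums_mult s1 s0 sm)
  have le: "phi (pp l (i + Suc m)) \<le> g i" for i
  proof -
    have "phi (pp l (i + Suc m)) \<le> pp l (Suc (Suc (i + Suc n))) * (l + real (Suc (Suc (i + Suc n))) * real (Suc (Suc (i + Suc n))) / l - real (Suc (Suc (i + Suc n))))"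
      using phi_pp_le[OF l, of "i + Suc m"] mn by (simp add: add.commute add.left_commute)
    also have "\<dots> = g i" unfolding pp_shift2[OF l] g_def by (simp add: add.commute add.left_commute)
    finally show ?thesis .
  qed
  have nn: "0 \<le> phi (pp l (i + Suc m))" for i using phi_nonneg pp_pos[OF l] pp_le1[OF l] less_imp_le by blast
  show sumphi: "summable (\<lambda>i. phi (pp l (i + Suc m)))"
    by (rule summable_comparison_test[of _ g]) (use le nn sums_summable[OF sg] in auto)
  have "(\<Sum>i. phi (pp l (i + Suc m))) \<le> l * A1 + l * Am + (1 - l) * A0"
    by (rule sums_le[OF le summable_sums[OF sumphi] sg])
  also have "\<dots> = l * Am + A0 - l * pp l (Suc (Suc n))"
    unfolding A1_def A0_def by (simp add: PF_Suc algebra_simps)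
  also have "\<dots> \<le> l * Am + A0" using pp_pos[OF l] l by (simp add: less_imp_le)
  also have "A0 \<le> l * Am"
  proof -
    have sA: "(\<lambda>i. l / real m * pp l (i + Suc n)) sums (l / real m * Am)" by (intro sums_mult sm)
    have le2: "pp l (i + Suc (Suc n)) \<le> l / real m * pp l (i + Suc n)" for i
    proof -
      have "pp l (i + Suc (Suc n)) = l / real (Suc (i + Suc n)) * pp l (i + Suc n)"
        using pp_Suc[of l "i + Suc n"] by simp
      also have "\<dots> \<le> l / real m * pp l (i + Suc n)"
        using l mn pp_pos[OF l] by (intro mult_right_mono divide_left_mono) (auto simp: less_imp_le)
      finally show ?thesis .
    qed
    have "A0 \<le> l / real m * Am" by (rule sums_le[OF le2 s0 sA])
    also have "\<dots> \<le> l * Am"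
    proof (rule mult_right_mono)
      show "l / real m \<le> l" using l mn by (simp add: divide_le_eq mult_le_cancel_left1)
      show "0 \<le> Am" unfolding Am_def using PF_le1[OF l] by simp
    qed
    finally show ?thesis .
  qed
  also have "Am = (\<Sum>i. pp l (i + Suc n))" using sm sums_unique by blast
  also have "\<dots> \<le> exp (- (l + real (Suc n) * ln (real (Suc n) / (l * exp 1))))"
    by (rule chernoff[OF l]) (use lm mn in auto)
  finally show "(\<Sum>i. phi (pp l (i + Suc m))) \<le> 2 * l * exp (- (l + (real m - 1) * ln ((real m - 1) / (l * exp 1))))"
    using mn l by (simp add: algebra_simps)
qed




context CSset
begin

lemma P_zero:
  assumes "card I < k"
  shows "measure M {x \<in> space M. SX I x = real k} = 0"
proof -
  have "{x \<in> space M. SX I x = real k} = {}"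
  proof (rule ccontr)
    assume "{x \<in> space M. SX I x = real k} \<noteq> {}"
    then obtain x where x: "x \<in> space M" "SX I x = real k" by auto
    then have "cnt I x = k" using SX_cnt[of I x] by simp
    then show False using cnt_le[of I x] assms by simp
  qed
  then show ?thesis by (simp only: measure_empty)
qed

lemma P_sum1: "(\<Sum>k\<le>card I. measure M {x \<in> space M. SX I x = real k}) = 1"
proof -
  have mk: "{x \<in> space M. SX I x = real k} \<in> sets M" for k
    using SX_meas[of I] by measurable
  have ii: "integrable M (indicator {x \<in> space M. SX I x = real k} :: 'a \<Rightarrow> real)" for k
    by (rule int_bounded[where C = 1]) (use mk in \<open>auto simp: indicator_def\<close>)
  have "(\<Sum>k\<le>card I. measure M {x \<in> space M. SX I x = real k})
      = integral\<^sup>L M (\<lambda>x. (\<Sum>k\<le>card I. indicator {x \<in> space M. SX I x = real k} x :: real))"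
    using ii by (subst Bochner_Integration.integral_sum) (auto simp: Int_absorb2 Collect_conj_eq Int_commute)
  also have "\<dots> = integral\<^sup>L M (\<lambda>x. 1)"
  proof (rule Bochner_Integration.integral_cong[OF refl])
    fix x assume x: "x \<in> space M"
    have "(\<Sum>k\<le>card I. indicator {x \<in> space M. SX I x = real k} x :: real) = (\<Sum>k\<le>card I. if k = cnt I x then 1 else 0)"
      using SX_cnt[of I x] x by (intro sum.cong) (auto simp: indicator_def)
    also have "\<dots> = 1" using cnt_le[of I x] by (simp add: sum.delta')
    finally show "(\<Sum>k\<le>card I. indicator {x \<in> space M. SX I x = real k} x :: real) = 1" .
  qed
  also have "\<dots> = 1" by (simp add: prob_space)
  finally show ?thesis .
qed

end

lemma pp_summable_phi:
  assumes l: "l > 0" and lm: "l \<le> real m - 1"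
  shows "summable (\<lambda>k. phi (pp l k))"
  using tail_entropy(1)[OF l lm] by (subst summable_iff_shift[symmetric, of _ "Suc m"]) simp

theorem theorem5:
  fixes M :: "'a measure" and I :: "'i set" and X :: "'i \<Rightarrow> 'a \<Rightarrow> real"
    and B :: "'i \<Rightarrow> 'i set"
    and m :: nat and p :: "'i \<Rightarrow> real" and W :: "'a \<Rightarrow> real"
    and lam b1 b2 b3 a b HW HZ :: real
  assumes "prob_space M"
    and "finite I"
    and "\<And>\<alpha>. \<alpha> \<in> I \<Longrightarrow> X \<alpha> \<in> borel_measurable M"
    and "\<And>\<alpha> x. \<alpha> \<in> I \<Longrightarrow> x \<in> space M \<Longrightarrow> X \<alpha> x \<in> {0, 1}"
    and "\<And>\<alpha>. \<alpha> \<in> I \<Longrightarrow> measure M {x \<in> space M. X \<alpha> x = 1} > 0"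
    and "\<And>\<alpha>. \<alpha> \<in> I \<Longrightarrow> \<alpha> \<in> B \<alpha> \<and> B \<alpha> \<subseteq> I"
  assumes "m = card I"
    and "p = (\<lambda>\<alpha>. measure M {x \<in> space M. X \<alpha> x = 1})"
    and "W = (\<lambda>x. \<Sum>\<alpha>\<in>I. X \<alpha> x)"
    and "lam = (\<Sum>\<alpha>\<in>I. p \<alpha>)"
    and "b1 = (\<Sum>\<alpha>\<in>I. \<Sum>\<beta>\<in>B \<alpha>. p \<alpha> * p \<beta>)"
    and "b2 = (\<Sum>\<alpha>\<in>I. \<Sum>\<beta>\<in>B \<alpha> - {\<alpha>}. integral\<^sup>L M (\<lambda>x. X \<alpha> x * X \<beta> x))"
    and "b3 = (\<Sum>\<alpha>\<in>I. integral\<^sup>L M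
              (\<lambda>x. \<bar>real_cond_exp M (gen_sigma M (I - B \<alpha>) X) (\<lambda>y. X \<alpha> y - p \<alpha>) x\<bar>))"
    and "a = 2 * ((b1 + b2) * ((1 - exp (- lam)) / lam) + b3 * min 1 (1.4 / sqrt lam))"
    and "b = (max (lam * ln (exp 1 / lam)) 0 + lam ^ 2 + (6 * ln (2 * pi) + 1) / 12)
              * exp (- (lam + (real m - 1) * ln ((real m - 1) / (lam * exp 1))))"
    and "HW = nat_entropy (\<lambda>k. measure M {x \<in> space M. W x = real k})"
    and "HZ = nat_entropy (poisson_pmf_fun lam)"
  assumes "a \<le> 1 / 2" and "lam \<le> real m - 1"
  shows "\<bar>HZ - HW\<bar> \<le> a * ln ((real m + 2) / a) + b"
proof -
  note as = assms
  interpret CSset M I X B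
    by (rule CSset.intro[OF as(1)], rule CSset_axioms.intro) (fact as(2), fact as(3), fact as(4), fact as(6))
  have pdef: "p = pX" unfolding as(8) pX_def by (rule ext) simp
  have Wdef: "W = SX I" unfolding as(9) SX_def by (rule ext) simp
  have GSdef: "gen_sigma M (I - B \<alpha>) X = GS \<alpha>" for \<alpha> unfolding GS_def ..
  have p0: "\<And>\<alpha>. \<alpha> \<in> I \<Longrightarrow> pX \<alpha> > 0" using as(5) unfolding pX_def by simp
  have pge: "\<And>\<alpha>. 0 \<le> pX \<alpha>" unfolding pX_def by simp
  have ldef: "lam = (\<Sum>\<alpha>\<in>I. pX \<alpha>)" using as(10) pdef by simp
  have lam0: "lam > 0"
  proof -
    have "lam \<ge> 0" unfolding ldef using pge by (simp add: sum_nonneg)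
    then have "real m \<ge> 1" using as(19) by simp
    then have "I \<noteq> {}" using as(7) by auto
    then show ?thesis unfolding ldef using p0 finI by (intro sum_pos) auto
  qed
  have m2: "real m \<ge> 2" using lam0 as(19) by simp
  define db where "db = (1 - exp (- lam)) / lam"
  define gb where "gb = min 1 (1.4 / sqrt lam)"
  have db0: "0 < db" unfolding db_def using lam0 by simp
  have gb0: "0 \<le> gb" unfolding gb_def using lam0 by simp
  have b1pos: "b1 > 0"
  proof -
    obtain \<alpha> where a: "\<alpha> \<in> I" using lam0 unfolding ldef by (metis sum.empty less_irrefl ex_in_conv)
    have "(\<Sum>\<beta>\<in>B \<alpha>. pX \<alpha> * pX \<beta>) \<ge> pX \<alpha> * pX \<alpha>"
      using Bp[OF a] finI pge by (intro member_le_sum) (auto intro: finite_subset)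
    moreover have "pX \<alpha> * pX \<alpha> > 0" using p0[OF a] by simp
    moreover have "b1 = (\<Sum>\<alpha>\<in>I. \<Sum>\<beta>\<in>B \<alpha>. pX \<alpha> * pX \<beta>)" using as(11) pdef by simp
    moreover have "(\<Sum>\<beta>\<in>B \<alpha>. pX \<alpha> * pX \<beta>) \<le> (\<Sum>\<alpha>\<in>I. \<Sum>\<beta>\<in>B \<alpha>. pX \<alpha> * pX \<beta>)"
      using a finI pge by (intro member_le_sum sum_nonneg mult_nonneg_nonneg) auto
    ultimately show ?thesis by linarith
  qed
  have b2nn: "b2 \<ge> 0"
    unfolding as(12)
  proof (intro sum_nonneg)
    fix \<alpha> \<beta> assume "\<alpha> \<in> I" "\<beta> \<in> B \<alpha> - {\<alpha>}"
    then have ab: "\<alpha> \<in> I" "\<beta> \<in> I" using Bp by auto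
    show "0 \<le> integral\<^sup>L M (\<lambda>x. X \<alpha> x * X \<beta> x)"
      using X01[OF ab(1)] X01[OF ab(2)] by (intro integral_nonneg_AE AE_I2) fastforce
  qed
  have b3nn: "b3 \<ge> 0" unfolding as(13) by (intro sum_nonneg integral_nonneg_AE AE_I2) auto
  have adef: "a = 2 * (db * (b1 + b2) + gb * b3)" unfolding as(14) db_def gb_def by (simp add: algebra_simps)
  have apos: "a > 0" unfolding adef using db0 gb0 b1pos b2nn b3nn by (simp add: add_pos_nonneg)
  define P where "P k = measure M {x \<in> space M. W x = real k}" for k
  define Q where "Q k = pp lam k" for k
  define \<tau> where "\<tau> = 1 - PF lam m"
  have P01: "0 \<le> P k" "P k \<le> 1" for k unfolding P_def by auto
  have Q01: "0 \<le> Q k" "Q k \<le> 1" for k unfolding Q_def using pp_pos[OF lam0] pp_le1[OF lam0] less_imp_le by auto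
  have tau01: "0 \<le> \<tau>" "\<tau> \<le> 1" unfolding \<tau>_def using PF_le1[OF lam0] PF_nonneg[OF lam0] by auto
  have Pz: "k > m \<Longrightarrow> P k = 0" for k unfolding P_def Wdef as(7) using P_zero by simp
  have Psum: "(\<Sum>k\<le>m. P k) = 1" unfolding P_def Wdef as(7) using P_sum1 .
  have Qsum: "(\<Sum>k\<le>m. Q k) = 1 - \<tau>" unfolding Q_def \<tau>_def PF_def by simp
  define A where "A = {k \<in> {..m}. P k > Q k}"
  have Asub: "A \<subseteq> {..card I}" unfolding A_def as(7) by auto
  have CS: "\<bar>(\<Sum>k\<in>A. P k) - (\<Sum>k\<in>A. Q k)\<bar> \<le> db * (b1 + b2) + gb * b3"
    using stein_total[OF ldef lam0 Asub] unfolding P_def Q_def Wdef db_def gb_def as(11,12,13) pdef GSdef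
    by simp
  have L1: "(\<Sum>k\<le>m. \<bar>P k - Q k\<bar>) + \<tau> \<le> a"
  proof -
    have "(\<Sum>k\<le>m. \<bar>P k - Q k\<bar>) = (\<Sum>k\<le>m. 2 * (if P k > Q k then P k - Q k else 0) - (P k - Q k))"
      by (intro sum.cong) auto
    also have "\<dots> = 2 * (\<Sum>k\<le>m. if P k > Q k then P k - Q k else 0) - ((\<Sum>k\<le>m. P k) - (\<Sum>k\<le>m. Q k))"
      by (simp add: sum_subtractf sum_distrib_left)
    also have "(\<Sum>k\<le>m. if P k > Q k then P k - Q k else 0) = (\<Sum>k\<in>A. P k) - (\<Sum>k\<in>A. Q k)"
      unfolding A_def by (simp add: sum.inter_filter[symmetric] sum_subtractf)
    finally have "(\<Sum>k\<le>m. \<bar>P k - Q k\<bar>) + \<tau> = 2 * ((\<Sum>k\<in>A. P k) - (\<Sum>k\<in>A. Q k))"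
      using Psum Qsum by simp
    moreover have "(\<Sum>k\<in>A. P k) - (\<Sum>k\<in>A. Q k) \<le> db * (b1 + b2) + gb * b3"
      by (rule order_trans[OF abs_ge_self CS])
    ultimately show ?thesis unfolding adef by simp
  qed
  \<comment> \<open>Cover-Thomas on m+2 symbols\<close>
  define p' where "p' k = (if k \<le> m then P k else 0)" for k
  define q' where "q' k = (if k \<le> m then Q k else \<tau>)" for k
  have CT: "\<bar>(\<Sum>k\<le>Suc m. phi (q' k)) - (\<Sum>k\<le>Suc m. phi (p' k))\<bar> \<le> a * ln ((real (Suc m) + 1) / a)"
  proof (rule cover_thomas)
    show "0 \<le> p' k \<and> p' k \<le> 1 \<and> 0 \<le> q' k \<and> q' k \<le> 1" for k
      unfolding p'_def q'_def using P01 Q01 tau01 by auto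
    have "(\<Sum>k\<le>Suc m. \<bar>p' k - q' k\<bar>) = (\<Sum>k\<le>m. \<bar>P k - Q k\<bar>) + \<tau>"
      unfolding p'_def q'_def using tau01 by (simp add: atMost_Suc)
    then show "(\<Sum>k\<le>Suc m. \<bar>p' k - q' k\<bar>) \<le> a" using L1 by simp
  qed (use apos as(18) in auto)
  have sq: "(\<Sum>k\<le>Suc m. phi (q' k)) = (\<Sum>k\<le>m. phi (Q k)) + phi \<tau>"
    unfolding q'_def by (simp add: atMost_Suc)
  have sp: "(\<Sum>k\<le>Suc m. phi (p' k)) = (\<Sum>k\<le>m. phi (P k))"
    unfolding p'_def by (simp add: atMost_Suc phi_def)
  have HWe: "HW = (\<Sum>k\<le>m. phi (P k))"
  proof -
    have "(\<Sum>k. P k * ln (P k)) = (\<Sum>k\<le>m. P k * ln (P k))"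
      by (rule suminf_finite) (use Pz in auto)
    then show ?thesis unfolding as(16) nat_entropy_def P_def[symmetric] phi_def by (simp add: sum_negf)
  qed
  have sphi: "summable (\<lambda>k. phi (Q k))" unfolding Q_def by (rule pp_summable_phi[OF lam0 as(19)])
  define tl where "tl = (\<Sum>i. phi (Q (i + Suc m)))"
  have HZe: "HZ = (\<Sum>k\<le>m. phi (Q k)) + tl"
  proof -
    have s1: "summable (\<lambda>k. Q k * ln (Q k))"
      using summable_minus[OF sphi] unfolding phi_def by simp
    have "HZ = (\<Sum>k. phi (Q k))"
      unfolding as(17) nat_entropy_def Q_def[symmetric] phi_def using suminf_minus[OF s1] by simp
    also have "\<dots> = tl + (\<Sum>k<Suc m. phi (Q k))" unfolding tl_def
      by (rule suminf_split_initial_segment[OF sphi])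
    finally show ?thesis by (simp add: lessThan_Suc_atMost)
  qed
  have tlb: "tl \<le> 2 * lam * exp (- (lam + (real m - 1) * ln ((real m - 1) / (lam * exp 1))))"
    unfolding tl_def Q_def by (rule tail_entropy(2)[OF lam0 as(19)])
  have tlsum: "summable (\<lambda>i. phi (Q (i + Suc m)))"
    unfolding Q_def by (rule tail_entropy(1)[OF lam0 as(19)])
  have tl_ge: "phi \<tau> \<le> tl"
  proof -
    have ts: "(\<lambda>i. Q (i + Suc m)) sums \<tau>" unfolding Q_def \<tau>_def by (rule tail_sums)
    have s2: "(\<lambda>i. - (Q (i + Suc m) * ln \<tau>)) sums phi \<tau>"
      unfolding phi_def using sums_mult2[OF ts, of "ln \<tau>"] by (intro sums_minus) simp
    have le: "- (Q (i + Suc m) * ln \<tau>) \<le> phi (Q (i + Suc m))" for i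
    proof -
      have qp: "Q (i + Suc m) > 0" unfolding Q_def using pp_pos[OF lam0] .
      have "Q (i + Suc m) \<le> \<tau>"
      proof -
        have "sum (\<lambda>j. Q (j + Suc m)) {i} \<le> (\<Sum>j. Q (j + Suc m))"
          by (rule sum_le_suminf) (use ts Q01 in \<open>auto simp: sums_summable\<close>)
        then show ?thesis using sums_unique[OF ts] by simp
      qed
      then have "ln (Q (i + Suc m)) \<le> ln \<tau>" using qp by simp
      then show ?thesis unfolding phi_def using qp by (simp add: mult_left_mono)
    qed
    show ?thesis unfolding tl_def by (rule sums_le[OF le s2 summable_sums[OF tlsum]])
  qed
  have phitau: "0 \<le> phi \<tau>" using phi_nonneg tau01 by simp
  have bb: "2 * lam * exp (- (lam + (real m - 1) * ln ((real m - 1) / (lam * exp 1)))) \<le> b"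
  proof -
    have c0: "0 \<le> (6 * ln (2 * pi) + 1) / 12"
    proof -
      have "1 \<le> 2 * pi" using pi_gt3 by simp
      then have "0 \<le> ln (2 * pi)" by simp
      then show ?thesis by simp
    qed
    have "lam * ln (exp 1 / lam) = lam * (1 - ln lam)" using lam0 by (simp add: ln_div)
    also have "\<dots> \<ge> lam * (1 - (lam - 1))" using ln_le_minus_one[OF lam0] lam0 by (intro mult_left_mono) auto
    finally have h1: "lam * (1 - (lam - 1)) \<le> lam * ln (exp 1 / lam)" .
    have h2: "lam * ln (exp 1 / lam) \<le> max (lam * ln (exp 1 / lam)) 0" by simp
    have h3: "lam * (1 - (lam - 1)) = 2 * lam - lam ^ 2" by (simp add: power2_eq_square algebra_simps)
    have "2 * lam \<le> max (lam * ln (exp 1 / lam)) 0 + lam ^ 2 + (6 * ln (2 * pi) + 1) / 12"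
      using h1 h2 h3 c0 by linarith
    then show ?thesis unfolding as(15) by (intro mult_right_mono) auto
  qed
  have "\<bar>HZ - HW\<bar> = \<bar>((\<Sum>k\<le>Suc m. phi (q' k)) - (\<Sum>k\<le>Suc m. phi (p' k))) + (tl - phi \<tau>)\<bar>"
    unfolding HZe HWe sq sp by simp
  also have "\<dots> \<le> \<bar>(\<Sum>k\<le>Suc m. phi (q' k)) - (\<Sum>k\<le>Suc m. phi (p' k))\<bar> + \<bar>tl - phi \<tau>\<bar>"
    by (rule abs_triangle_ineq)
  also have "\<dots> \<le> a * ln ((real m + 2) / a) + b"
  proof (rule add_mono)
    show "\<bar>(\<Sum>k\<le>Suc m. phi (q' k)) - (\<Sum>k\<le>Suc m. phi (p' k))\<bar> \<le> a * ln ((real m + 2) / a)"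
      using CT by (simp add: add.commute)
    show "\<bar>tl - phi \<tau>\<bar> \<le> b" using tl_ge phitau tlb bb by simp
  qed
  finally show ?thesis .
qed



end
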